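(* Let $n\ge 5$. If $x\in\mathrm{Sort}_n(123,321)$, then $s_{123,321}(x)=s_{123,321}(\mathrm{swap}(x))$.
   Context: For a permutation $x$ of length at least two, $\mathrm{swap}(x)$ is the permutation obtained from $x$ by interchanging the entries $1$ and $2$. A permutation contains a pattern $p$ if it has a subsequence order-isomorphic to $p$; otherwise it avoids $p$. For a set $T$ of patterns, the map $s_T$ is defined as follows: the entries of the input permutation are read from left to right, with an initially empty stack. At each step, if the input is nonempty and pushing the next input entry onto the stack produces a stack whose contents, read from top to bottom, avoid every pattern in $T$, that entry is pushed; otherwise the top entry of the stack is popped and appended to the output. When the input is exhausted, the remaining stack entries are popped one at a time to the output. Write $s_{\sigma,\tau}=s_{\{\sigma,\tau\}}$ and $s=s_{\{21\}}$ (West's stack-sorting map). $\mathrm{Sort}_n(\sigma,\tau)$ is the set of $x\in S_n$ with $s(s_{\sigma,\tau}(x))=12\cdots n$. *)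

theory Defs
  imports Main "HOL-Library.Sublist"
begin

definition perms :: "nat \<Rightarrow> nat list set" where
  "perms n = {xs. distinct xs \<and> set xs = {1..n}}"

definition order_iso :: "nat list \<Rightarrow> nat list \<Rightarrow> bool" where
  "order_iso ys p \<longleftrightarrow> length ys = length p \<and>
     (\<forall>i<length p. \<forall>j<length p. ys ! i < ys ! j \<longleftrightarrow> p ! i < p ! j)"

definition contains :: "nat list \<Rightarrow> nat list \<Rightarrow> bool" where
  "contains xs p \<longleftrightarrow> (\<exists>ys. subseq ys xs \<and> order_iso ys p)"

definition avoids :: "nat list \<Rightarrow> nat list \<Rightarrow> bool" where
  "avoids xs p \<longleftrightarrow> \<not> contains xs p"

text \<open>Stack machine. The stack is a list whose head is the top, so the list itself
  is the stack contents read from top to bottom. Arguments: pattern set, remaining input,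
  stack, output so far.\<close>
function stsort :: "nat list set \<Rightarrow> nat list \<Rightarrow> nat list \<Rightarrow> nat list \<Rightarrow> nat list" where
  "stsort T [] st out = out @ st"
| "stsort T (x # xs) [] out = stsort T xs [x] out"
| "stsort T (x # xs) (y # st) out =
     (if (\<forall>p\<in>T. avoids (x # y # st) p) then stsort T xs (x # y # st) out
      else stsort T (x # xs) st (out @ [y]))"
  by pat_completeness auto
termination
  by (relation "measure (\<lambda>(T, xs, st, out). 2 * length xs + length st)") auto

definition stack_sort_T :: "nat list set \<Rightarrow> nat list \<Rightarrow> nat list" where
  "stack_sort_T T x = stsort T x [] []"

definition s_123_321 :: "nat list \<Rightarrow> nat list" where
  "s_123_321 = stack_sort_T {[1,2,3], [3,2,1]}"

definition west_s :: "nat list \<Rightarrow> nat list" where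
  "west_s = stack_sort_T {[2,1]}"

definition swap12 :: "nat list \<Rightarrow> nat list" where
  "swap12 x = map (\<lambda>v. if v = 1 then 2 else if v = 2 then 1 else v) x"

definition Sort_123_321 :: "nat \<Rightarrow> nat list set" where
  "Sort_123_321 n = {x \<in> perms n. west_s (s_123_321 x) = [1..<n+1]}"

end

theory Submission
  imports Defs
begin


fun inc2 :: "nat \<Rightarrow> nat list \<Rightarrow> bool" where
  "inc2 x [] = False"
| "inc2 x (y # l) = ((x < y \<and> (\<exists>z\<in>set l. y < z)) \<or> inc2 x l)"
fun has123 :: "nat list \<Rightarrow> bool" where
  "has123 [] = False"
| "has123 (x # l) = (inc2 x l \<or> has123 l)"
fun dec2 :: "nat \<Rightarrow> nat list \<Rightarrow> bool" where
  "dec2 x [] = False"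
| "dec2 x (y # l) = ((y < x \<and> (\<exists>z\<in>set l. z < y)) \<or> dec2 x l)"
fun has321 :: "nat list \<Rightarrow> bool" where
  "has321 [] = False"
| "has321 (x # l) = (dec2 x l \<or> has321 l)"
fun has21 :: "nat list \<Rightarrow> bool" where
  "has21 [] = False"
| "has21 (x # l) = ((\<exists>y\<in>set l. y < x) \<or> has21 l)"

lemma len3E: assumes "length ys = 3" obtains p q r where "ys = [p,q,r]"
  using assms by (auto simp: eval_nat_numeral length_Suc_conv)
lemma len2E: assumes "length ys = 2" obtains p q where "ys = [p,q]"
  using assms by (auto simp: eval_nat_numeral length_Suc_conv)

lemma lt3: "(i::nat) < 3 \<Longrightarrow> i = 0 \<or> i = 1 \<or> i = 2" by arith
lemma lt2: "(i::nat) < 2 \<Longrightarrow> i = 0 \<or> i = 1" by arith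
lemma all3: "(\<forall>i<(3::nat). P i) \<longleftrightarrow> P 0 \<and> P 1 \<and> P 2"
  by (simp add: eval_nat_numeral less_Suc_eq) blast
lemma all2: "(\<forall>i<(2::nat). P i) \<longleftrightarrow> P 0 \<and> P 1"
  by (simp add: eval_nat_numeral less_Suc_eq) blast

lemma order_iso123: "order_iso ys [1,2,3] \<longleftrightarrow> (\<exists>p q r. ys = [p,q,r] \<and> p < q \<and> q < r)"
proof
  assume h: "order_iso ys [1,2,3]"
  then have "length ys = 3" by (simp add: order_iso_def)
  then obtain p q r where ys: "ys = [p,q,r]" by (rule len3E)
  show "\<exists>p q r. ys = [p,q,r] \<and> p < q \<and> q < r" proof -
    have H: "\<And>i j. i < 3 \<Longrightarrow> j < 3 \<Longrightarrow> ([p,q,r] ! i < [p,q,r] ! j) = ([1,2,3] ! i < ([1,2,3]::nat list) ! j)"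
      using h unfolding ys order_iso_def by (auto simp: eval_nat_numeral)
    show ?thesis using H[of 0 1] H[of 1 2] ys by simp
  qed
next
  assume "\<exists>p q r. ys = [p,q,r] \<and> p < q \<and> q < r"
  then obtain p q r where "ys = [p,q,r]" "p < q" "q < r" by blast
  then show "order_iso ys [1,2,3]" unfolding order_iso_def by (simp add: less_Suc_eq nth_Cons')
qed

lemma order_iso321: "order_iso ys [3,2,1] \<longleftrightarrow> (\<exists>p q r. ys = [p,q,r] \<and> q < p \<and> r < q)"
proof
  assume h: "order_iso ys [3,2,1]"
  then have "length ys = 3" by (simp add: order_iso_def)
  then obtain p q r where ys: "ys = [p,q,r]" by (rule len3E)
  show "\<exists>p q r. ys = [p,q,r] \<and> q < p \<and> r < q" proof -
    have H: "\<And>i j. i < 3 \<Longrightarrow> j < 3 \<Longrightarrow> ([p,q,r] ! i < [p,q,r] ! j) = ([3,2,1] ! i < ([3,2,1]::nat list) ! j)"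
      using h unfolding ys order_iso_def by (auto simp: eval_nat_numeral)
    show ?thesis using H[of 1 0] H[of 2 1] ys by simp
  qed
next
  assume "\<exists>p q r. ys = [p,q,r] \<and> q < p \<and> r < q"
  then obtain p q r where "ys = [p,q,r]" "q < p" "r < q" by blast
  then show "order_iso ys [3,2,1]" unfolding order_iso_def by (simp add: less_Suc_eq nth_Cons')
qed

lemma order_iso21: "order_iso ys [2,1] \<longleftrightarrow> (\<exists>p q. ys = [p,q] \<and> q < p)"
proof
  assume h: "order_iso ys [2,1]"
  then have "length ys = 2" by (simp add: order_iso_def)
  then obtain p q where ys: "ys = [p,q]" by (rule len2E)
  show "\<exists>p q. ys = [p,q] \<and> q < p" proof -
    have H: "\<And>i j. i < 2 \<Longrightarrow> j < 2 \<Longrightarrow> ([p,q] ! i < [p,q] ! j) = ([2,1] ! i < ([2,1]::nat list) ! j)"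
      using h unfolding ys order_iso_def by (auto simp: eval_nat_numeral)
    show ?thesis using H[of 1 0] ys by simp
  qed
next
  assume "\<exists>p q. ys = [p,q] \<and> q < p"
  then obtain p q where "ys = [p,q]" "q < p" by blast
  then show "order_iso ys [2,1]" unfolding order_iso_def by (simp add: less_Suc_eq nth_Cons')
qed

lemma subseq_Cons_r: "subseq (y # ys) (a # l) \<longleftrightarrow> subseq (y#ys) l \<or> (y = a \<and> subseq ys l)"
  by (auto dest: subseq_Cons')

lemma sub2_Cons: "subseq [q,r] (y#l) \<longleftrightarrow> subseq [q,r] l \<or> (q = y \<and> r \<in> set l)"
  by (simp add: subseq_Cons_r subseq_singleton_left del: subseq_Cons2_iff)
lemma sub3_Cons: "subseq [p,q,r] (y#l) \<longleftrightarrow> subseq [p,q,r] l \<or> (p = y \<and> subseq [q,r] l)"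
  by (simp add: subseq_Cons_r del: subseq_Cons2_iff)

lemma inc2_iff: "inc2 x l \<longleftrightarrow> (\<exists>q r. subseq [q,r] l \<and> x < q \<and> q < r)"
proof (induction l)
  case (Cons y l)
  show ?case unfolding sub2_Cons inc2.simps Cons.IH by blast
qed simp
lemma dec2_iff: "dec2 x l \<longleftrightarrow> (\<exists>q r. subseq [q,r] l \<and> q < x \<and> r < q)"
proof (induction l)
  case (Cons y l)
  show ?case unfolding sub2_Cons dec2.simps Cons.IH by blast
qed simp
lemma has123_iff: "has123 l \<longleftrightarrow> (\<exists>p q r. subseq [p,q,r] l \<and> p < q \<and> q < r)"
proof (induction l)
  case (Cons y l)
  show ?case unfolding sub3_Cons has123.simps Cons.IH inc2_iff by blast
qed simp
lemma has321_iff: "has321 l \<longleftrightarrow> (\<exists>p q r. subseq [p,q,r] l \<and> q < p \<and> r < q)"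
proof (induction l)
  case (Cons y l)
  show ?case unfolding sub3_Cons has321.simps Cons.IH dec2_iff by blast
qed simp
lemma has21_iff: "has21 l \<longleftrightarrow> (\<exists>p q. subseq [p,q] l \<and> q < p)"
proof (induction l)
  case (Cons y l)
  show ?case unfolding sub2_Cons has21.simps Cons.IH by blast
qed simp

lemma avoids123: "avoids l [1,2,3] \<longleftrightarrow> \<not> has123 l"
  unfolding avoids_def contains_def has123_iff order_iso123 by auto
lemma avoids321: "avoids l [3,2,1] \<longleftrightarrow> \<not> has321 l"
  unfolding avoids_def contains_def has321_iff order_iso321 by auto
lemma avoids21: "avoids l [2,1] \<longleftrightarrow> \<not> has21 l"
  unfolding avoids_def contains_def has21_iff order_iso21 by auto



fun feedP :: "(nat list \<Rightarrow> bool) \<Rightarrow> nat \<Rightarrow> nat list \<times> nat list \<Rightarrow> nat list \<times> nat list" where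
  "feedP Q c ([], ot) = ([c], ot)"
| "feedP Q c (y # s, ot) = (if Q (c # y # s) then (c # y # s, ot) else feedP Q c (s, ot @ [y]))"

definition view :: "nat list \<times> nat list \<Rightarrow> nat list" where
  "view st = snd st @ fst st"

lemma stsort_fold: "stsort T xs st out = view (fold (feedP (\<lambda>l. \<forall>p\<in>T. avoids l p)) xs (st, out))"
  by (induction T xs st out rule: stsort.induct) (simp_all add: view_def)

definition Q123 :: "nat list \<Rightarrow> bool" where
  "Q123 l = (\<not> has123 l \<and> \<not> has321 l)"
definition QW :: "nat list \<Rightarrow> bool" where
  "QW l = (\<not> has21 l)"

lemma s_eq: "s_123_321 x = view (fold (feedP Q123) x ([],[]))"
proof -
  have "(\<lambda>l. \<forall>p\<in>{[1,2,3],[3,2,1]}. avoids l p) = Q123"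
  proof (rule ext)
    fix l show "(\<forall>p\<in>{[1,2,3],[3,2,1]}. avoids l p) = Q123 l"
      using avoids123[of l] avoids321[of l] unfolding Q123_def by auto
  qed
  then show ?thesis unfolding s_123_321_def stack_sort_T_def stsort_fold by simp
qed

lemma w_eq: "west_s x = view (fold (feedP QW) x ([],[]))"
proof -
  have "(\<lambda>l. \<forall>p\<in>{[2,1]}. avoids l p) = QW"
  proof (rule ext)
    fix l show "(\<forall>p\<in>{[2,1]}. avoids l p) = QW l"
      using avoids21[of l] unfolding QW_def by auto
  qed
  then show ?thesis unfolding west_s_def stack_sort_T_def stsort_fold by simp
qed

lemma feed_struct: "\<exists>s1 s2. s = s1 @ s2 \<and> feedP Q c (s, ot) = (c # s2, ot @ s1)"
proof (induction s arbitrary: ot)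
  case Nil then show ?case by simp
next
  case (Cons y s)
  show ?case
  proof (cases "Q (c # y # s)")
    case True then show ?thesis by (intro exI[of _ "[]"] exI[of _ "y # s"]) simp
  next
    case False
    obtain s1 s2 where "s = s1 @ s2" "feedP Q c (s, ot @ [y]) = (c # s2, (ot @ [y]) @ s1)"
      using Cons.IH by blast
    with False show ?thesis by (intro exI[of _ "y # s1"] exI[of _ s2]) simp
  qed
qed

lemma feed_split: "feedP Q c (t @ B, ot) = feedP Q c (B, ot @ t) \<or>
  (\<exists>t1 t2. t = t1 @ t2 \<and> t2 \<noteq> [] \<and> Q (c # t2 @ B) \<and> feedP Q c (t @ B, ot) = (c # t2 @ B, ot @ t1))"
proof (induction t arbitrary: ot)
  case Nil then show ?case by simp
next
  case (Cons y t)
  show ?case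
  proof (cases "Q (c # y # t @ B)")
    case True then show ?thesis by simp
  next
    case False
    then have e: "feedP Q c ((y # t) @ B, ot) = feedP Q c (t @ B, ot @ [y])" by simp
    from Cons.IH[of "ot @ [y]"] show ?thesis
    proof
      assume "feedP Q c (t @ B, ot @ [y]) = feedP Q c (B, (ot @ [y]) @ t)"
      then show ?thesis using e by simp
    next
      assume "\<exists>t1 t2. t = t1 @ t2 \<and> t2 \<noteq> [] \<and> Q (c # t2 @ B) \<and> feedP Q c (t @ B, ot @ [y]) = (c # t2 @ B, (ot @ [y]) @ t1)"
      then obtain t1 t2 where "t = t1 @ t2" "t2 \<noteq> []" "Q (c # t2 @ B)" "feedP Q c (t @ B, ot @ [y]) = (c # t2 @ B, (ot @ [y]) @ t1)" by blast
      then show ?thesis using e by (intro disjI2 exI[of _ "y # t1"] exI[of _ t2]) simp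
    qed
  qed
qed

lemma feed_prefix: "feedP Q c (s, p @ ot) = (fst (feedP Q c (s, ot)), p @ snd (feedP Q c (s, ot)))"
  by (induction Q c "(s, ot)" arbitrary: s ot rule: feedP.induct) auto

lemma fold_prefix: "fold (feedP Q) xs (s, p @ ot) = (fst (fold (feedP Q) xs (s, ot)), p @ snd (fold (feedP Q) xs (s, ot)))"
proof (induction xs arbitrary: s ot)
  case Nil then show ?case by simp
next
  case (Cons x xs)
  have "feedP Q x (s, p @ ot) = (fst (feedP Q x (s, ot)), p @ snd (feedP Q x (s, ot)))" by (rule feed_prefix)
  then show ?case using Cons.IH[of "fst (feedP Q x (s, ot))" "snd (feedP Q x (s, ot))"] by simp
qed

lemma view_feed: "\<exists>v1 v2. view st = v1 @ v2 \<and> view (feedP Q c st) = v1 @ c # v2"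
proof -
  obtain s ot where st: "st = (s, ot)" by fastforce
  obtain s1 s2 where "s = s1 @ s2" "feedP Q c (s, ot) = (c # s2, ot @ s1)" using feed_struct by blast
  then show ?thesis unfolding st view_def by (intro exI[of _ "ot @ s1"] exI[of _ s2]) simp
qed

lemma ins_subseq: "subseq (a @ b) (a @ c # b)"
proof -
  have "subseq b (c # b)" by (rule list_emb_Cons) simp
  then show ?thesis by (simp add: subseq_append')
qed

lemma view_feed_subseq: "subseq (view st) (view (feedP Q c st))"
  using view_feed[of st Q c] ins_subseq by metis

lemma view_feed_set: "set (view (feedP Q c st)) = insert c (set (view st))"
  using view_feed[of st Q c] by auto

lemma view_feed_distinct: "distinct (view st) \<Longrightarrow> c \<notin> set (view st) \<Longrightarrow> distinct (view (feedP Q c st))"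
  using view_feed[of st Q c] by auto

lemma view_fold_subseq: "subseq (view st) (view (fold (feedP Q) xs st))"
proof (induction xs arbitrary: st)
  case (Cons x xs)
  have "subseq (view (feedP Q x st)) (view (fold (feedP Q) xs (feedP Q x st)))" by (rule Cons.IH)
  then show ?case using view_feed_subseq[of st Q x] by (simp add: subseq_order.order_trans)
qed simp

lemma view_fold_set: "set (view (fold (feedP Q) xs st)) = set xs \<union> set (view st)"
  by (induction xs arbitrary: st) (auto simp: view_feed_set)

lemma view_fold_distinct: "distinct (view st) \<Longrightarrow> distinct xs \<Longrightarrow> set xs \<inter> set (view st) = {} \<Longrightarrow>
   distinct (view (fold (feedP Q) xs st))"
proof (induction xs arbitrary: st)
  case (Cons x xs)
  have "distinct (view (feedP Q x st))" using Cons.prems by (intro view_feed_distinct) auto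
  moreover have "set xs \<inter> set (view (feedP Q x st)) = {}" using Cons.prems by (auto simp: view_feed_set)
  ultimately show ?case using Cons by simp
qed simp

lemma out_fold_prefix: "\<exists>r. snd (fold (feedP Q) xs st) = snd st @ r"
proof (induction xs arbitrary: st)
  case (Cons x xs)
  obtain s ot where st: "st = (s, ot)" by fastforce
  obtain s1 s2 where "feedP Q x (s, ot) = (x # s2, ot @ s1)" using feed_struct by blast
  with Cons.IH[of "feedP Q x st"] show ?case unfolding st by auto
qed simp

lemma feed_bottom:
  assumes "B \<noteq> []" "Q (c # B)" "\<And>t2. t2 \<noteq> [] \<Longrightarrow> suffix t2 t \<Longrightarrow> (Q (c # t2 @ B) \<longleftrightarrow> Q' (c # t2))"
  shows "feedP Q c (t @ B, ot) = (fst (feedP Q' c (t, ot)) @ B, snd (feedP Q' c (t, ot)))"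
  using assms
proof (induction t arbitrary: ot)
  case Nil
  then obtain b B' where "B = b # B'" by (cases B) auto
  then show ?case using Nil by simp
next
  case (Cons y t)
  have h: "Q (c # y # t @ B) \<longleftrightarrow> Q' (c # y # t)" using Cons.prems(3)[of "y # t"] by simp
  have ih: "feedP Q c (t @ B, ot @ [y]) = (fst (feedP Q' c (t, ot @ [y])) @ B, snd (feedP Q' c (t, ot @ [y])))"
    using Cons.prems by (intro Cons.IH) (auto simp: suffix_Cons)
  show ?case using h ih by simp
qed



lemma feed_set: "set (fst (feedP Q c (t, ot))) \<subseteq> insert c (set t)"
  using feed_struct[of t Q c ot] by auto

lemma feed_out: "\<exists>r. snd (feedP Q c (t, ot)) = ot @ r"
  using feed_struct[of t Q c ot] by auto

lemma subseq_set: "subseq xs ys \<Longrightarrow> x \<in> set xs \<Longrightarrow> x \<in> set ys"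
  by (induction rule: list_emb.induct) auto

lemma subseq2_set: "subseq [p,q] l \<Longrightarrow> q \<in> set l"
  by (auto dest: subseq_Cons' simp: subseq_singleton_left)

lemma fold_bottom:
  assumes B: "B \<noteq> []"
    and H1: "\<And>c t. c \<in> A \<Longrightarrow> I t \<Longrightarrow> Q (c # B)"
    and H2: "\<And>c t t2. c \<in> A \<Longrightarrow> I t \<Longrightarrow> c \<notin> set t \<Longrightarrow> t2 \<noteq> [] \<Longrightarrow> suffix t2 t \<Longrightarrow> (Q (c # t2 @ B) \<longleftrightarrow> Q' (c # t2))"
    and H3: "\<And>c t ot. c \<in> A \<Longrightarrow> I t \<Longrightarrow> c \<notin> set t \<Longrightarrow> I (fst (feedP Q' c (t, ot)))"
  shows "I t \<Longrightarrow> distinct xs \<Longrightarrow> set xs \<inter> set t = {} \<Longrightarrow> set xs \<subseteq> A \<Longrightarrow>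
    fold (feedP Q) xs (t @ B, ot) = (fst (fold (feedP Q') xs (t, ot)) @ B, snd (fold (feedP Q') xs (t, ot)))"
proof (induction xs arbitrary: t ot)
  case Nil then show ?case by simp
next
  case (Cons c xs)
  have ct: "c \<notin> set t" and cA: "c \<in> A" using Cons.prems by auto
  have f: "feedP Q c (t @ B, ot) = (fst (feedP Q' c (t, ot)) @ B, snd (feedP Q' c (t, ot)))"
  proof (rule feed_bottom[OF B])
    show "Q (c # B)" using H1 cA Cons.prems(1) .
    show "\<And>t2. t2 \<noteq> [] \<Longrightarrow> suffix t2 t \<Longrightarrow> Q (c # t2 @ B) = Q' (c # t2)"
      using H2 cA Cons.prems(1) ct by blast
  qed
  let ?t = "fst (feedP Q' c (t, ot))"
  have "I ?t" using H3 cA Cons.prems(1) ct by blast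
  moreover have "distinct xs" using Cons.prems by auto
  moreover have "set xs \<inter> set ?t = {}" using Cons.prems feed_set[of Q' c t ot] by auto
  moreover have "set xs \<subseteq> A" using Cons.prems by auto
  ultimately have "fold (feedP Q) xs (?t @ B, snd (feedP Q' c (t, ot))) =
     (fst (fold (feedP Q') xs (?t, snd (feedP Q' c (t, ot)))) @ B, snd (fold (feedP Q') xs (?t, snd (feedP Q' c (t, ot)))))"
    by (rule Cons.IH)
  then show ?case using f by (simp only: fold.simps comp_def prod.collapse)
qed

definition W :: "nat list \<Rightarrow> bool" where "W y = sorted (west_s y)"

lemma has21_snoc: "\<forall>e\<in>set l. e < m \<Longrightarrow> has21 (l @ [m]) = has21 l"
  by (induction l) auto

lemma west_set: "set (west_s y) = set y"
  unfolding w_eq using view_fold_set[of QW y "([],[])"] by (simp add: view_def)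

lemma west_decomp:
  assumes "\<forall>e\<in>set L. e < m" "\<forall>e\<in>set R. e < m" "distinct R"
  shows "west_s (L @ m # R) = west_s L @ west_s R @ [m]"
proof -
  obtain sL oL where L: "fold (feedP QW) L ([],[]) = (sL, oL)" by fastforce
  have sLs: "set sL \<subseteq> set L" using view_fold_set[of QW L "([],[])"] L by (auto simp: view_def)
  have fm: "feedP QW m (sL @ [], oL) = ([m], oL @ sL)"
  proof -
    from feed_split[of QW m sL "[]" oL] show ?thesis
    proof
      assume "feedP QW m (sL @ [], oL) = feedP QW m ([], oL @ sL)" then show ?thesis by simp
    next
      assume "\<exists>t1 t2. sL = t1 @ t2 \<and> t2 \<noteq> [] \<and> QW (m # t2 @ []) \<and> feedP QW m (sL @ [], oL) = (m # t2 @ [], oL @ t1)"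
      then obtain t1 t2 where "sL = t1 @ t2" "t2 \<noteq> []" "QW (m # t2)" by auto
      then obtain e t2' where "t2 = e # t2'" "e \<in> set L" using sLs by (cases t2) auto
      then have "has21 (m # t2)" using assms(1) by auto
      then show ?thesis using \<open>QW (m # t2)\<close> by (simp add: QW_def)
    qed
  qed
  have fR: "fold (feedP QW) R ([] @ [m], oL @ sL) = (fst (fold (feedP QW) R ([], oL @ sL)) @ [m], snd (fold (feedP QW) R ([], oL @ sL)))"
  proof (rule fold_bottom[where I = "\<lambda>t. \<forall>e\<in>set t. e < m" and A = "set R"])
    fix c t t2 assume c: "c \<in> set R" and I: "\<forall>e\<in>set t. e < m" and "suffix t2 t"
    then have "\<forall>e\<in>set (c # t2). e < m" using assms(2) set_mono_suffix by fastforce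
    then show "QW (c # t2 @ [m]) = QW (c # t2)" using has21_snoc[of "c # t2" m] by (simp add: QW_def)
  next
    fix c t ot assume "c \<in> set R" "\<forall>e\<in>set t. e < m"
    then show "\<forall>e\<in>set (fst (feedP QW c (t, ot))). e < m" using feed_set[of QW c t ot] assms(2) by auto
  qed (use assms in \<open>auto simp: QW_def\<close>)
  have "west_s (L @ m # R) = view (fold (feedP QW) R (feedP QW m (sL @ [], oL)))"
    unfolding w_eq by (simp add: L)
  also have "\<dots> = oL @ sL @ view (fold (feedP QW) R ([], [])) @ [m]"
    unfolding fm using fR fold_prefix[of QW R "[]" "oL @ sL" "[]"] by (simp add: view_def)
  also have "\<dots> = west_s L @ west_s R @ [m]" unfolding w_eq by (simp add: L view_def)
  finally show ?thesis .
qed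

lemma W_decomp:
  assumes "\<forall>e\<in>set L. e < m" "\<forall>e\<in>set R. e < m" "distinct R" "W (L @ m # R)"
  shows "W L" "W R" "\<forall>l\<in>set L. \<forall>r\<in>set R. l \<le> r"
  using assms west_decomp[OF assms(1-3)] unfolding W_def
  by (auto simp: sorted_append west_set)

lemma split3: "[b,c,a] = X1 @ X2 \<Longrightarrow> (X1 = [] \<and> X2 = [b,c,a]) \<or> (X1 = [b] \<and> X2 = [c,a]) \<or> (X1 = [b,c] \<and> X2 = [a]) \<or> (X1 = [b,c,a] \<and> X2 = [])"
  by (cases X1; cases "tl X1"; cases "tl (tl X1)") (auto simp: Cons_eq_append_conv)

lemma not_W_231:
  assumes "subseq [b,c,a] y" "a < b" "b < c" "distinct y"
  shows "\<not> W y"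
  using assms
proof (induction "length y" arbitrary: y rule: less_induct)
  case less
  have ne: "y \<noteq> []" using less.prems by auto
  define m where "m = Max (set y)"
  have "m \<in> set y" using ne unfolding m_def by simp
  then obtain L R where y: "y = L @ m # R" by (meson split_list)
  have dy: "distinct (L @ m # R)" using less.prems y by simp
  have le: "\<forall>e\<in>set y. e \<le> m" unfolding m_def by simp
  have "\<forall>e\<in>set L. e \<le> m \<and> e \<noteq> m" "\<forall>e\<in>set R. e \<le> m \<and> e \<noteq> m" using le dy y by auto
  then have Lm: "\<forall>e\<in>set L. e < m" and Rm: "\<forall>e\<in>set R. e < m" by auto
  have "c \<in> set y" using list_emb_set[OF less.prems(1), of c] by auto
  then have cm: "c \<le> m" using le by auto
  show ?case
  proof
    assume Wy: "W y"
    have WL: "W L" and WR: "W R" and LR: "\<forall>l\<in>set L. \<forall>r\<in>set R. l \<le> r"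
      using W_decomp[OF Lm Rm _ Wy[unfolded y]] dy by auto
    obtain X1 X2 where X: "[b,c,a] = X1 @ X2" "subseq X1 L" "subseq X2 (m # R)"
      using less.prems(1) y by (auto elim: subseq_appendE)
    from split3[OF X(1)] show False
    proof (elim disjE conjE)
      assume "X1 = []" "X2 = [b,c,a]"
      then have "subseq [b,c,a] R" using X(3) less.prems cm by (auto split: if_splits)
      then have "\<not> W R" using less.hyps[of R] less.prems dy y by auto
      then show False using WR by simp
    next
      assume "X1 = [b]" "X2 = [c,a]"
      then have "b \<in> set L" "a \<in> set R" using X less.prems cm
        by (auto simp: subseq_singleton_left dest: subseq2_set split: if_splits)
      then show False using LR less.prems by fastforce
    next
      assume "X1 = [b,c]" "X2 = [a]"
      then have "b \<in> set L" using X subseq_set[of "[b,c]" L b] by simp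
      moreover have "a \<in> set R" using X \<open>X2 = [a]\<close> less.prems cm
        by (auto simp: subseq_singleton_left split: if_splits)
      ultimately show False using LR less.prems by fastforce
    next
      assume "X1 = [b,c,a]" "X2 = []"
      then have "\<not> W L" using less.hyps[of L] less.prems dy y X by auto
      then show False using WL by simp
    qed
  qed
qed

lemma W_subseq231: "subseq [b,c,a] v \<Longrightarrow> subseq v y \<Longrightarrow> a < b \<Longrightarrow> b < c \<Longrightarrow> distinct y \<Longrightarrow> \<not> W y"
proof -
  assume a: "subseq [b,c,a] v" "subseq v y" "a < b" "b < c" "distinct y"
  have "subseq [b,c,a] y" using a(1,2) by (rule subseq_order.order_trans)
  then show "\<not> W y" using not_W_231 a by blast
qed



definition QM :: "nat list \<Rightarrow> bool" where
  "QM l = (case l of [c, y] \<Rightarrow> y < c | _ \<Rightarrow> False)"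

definition Mvalid :: "nat list \<Rightarrow> bool" where
  "Mvalid t = (t = [] \<or> (\<exists>y. t = [y]) \<or> (\<exists>y z. t = [y,z] \<and> z < y))"

definition Mrun :: "nat list \<Rightarrow> nat list" where
  "Mrun z = view (fold (feedP QM) z ([],[]))"

lemma feed_Q: "fst (feedP Q c (s, ot)) = [c] \<or> Q (fst (feedP Q c (s, ot)))"
  by (induction Q c "(s, ot)" arbitrary: s ot rule: feedP.induct) auto

lemma Mvalid_feed: "Mvalid (fst (feedP QM c (t, ot)))"
proof -
  have gen: "Mvalid r" if "r = [c] \<or> QM r" for r
    using that unfolding Mvalid_def QM_def
    by (cases r rule: remdups_adj.cases) (auto split: list.splits)
  show ?thesis by (rule gen) (rule feed_Q)
qed

lemma Mvalid_suffix: "Mvalid t \<Longrightarrow> t2 \<noteq> [] \<Longrightarrow> suffix t2 t \<Longrightarrow> (\<exists>y. t2 = [y]) \<or> (\<exists>y z. t2 = [y,z] \<and> z < y)"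
  unfolding Mvalid_def by (auto simp: suffix_Cons)

lemma M_embed:
  assumes B: "B = [b] \<or> (B = [b, b'] \<and> b' < b)"
    and lt: "\<forall>x \<in> set z \<union> set t. \<forall>e\<in>set B. x < e" and "Mvalid t" "distinct z" "set z \<inter> set t = {}"
  shows "fold (feedP Q123) z (t @ B, ot) = (fst (fold (feedP QM) z (t, ot)) @ B, snd (fold (feedP QM) z (t, ot)))"
proof (rule fold_bottom[where A = "{x. \<forall>e\<in>set B. x < e}" and I = "\<lambda>t. Mvalid t \<and> (\<forall>x\<in>set t. \<forall>e\<in>set B. x < e)"])
  show "B \<noteq> []" using B by auto
  show "\<And>c t. c \<in> {x. \<forall>e\<in>set B. x < e} \<Longrightarrow> Mvalid t \<and> (\<forall>x\<in>set t. \<forall>e\<in>set B. x < e) \<Longrightarrow> Q123 (c # B)"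
    using B by (auto simp: Q123_def)
  show "\<And>c t t2. c \<in> {x. \<forall>e\<in>set B. x < e} \<Longrightarrow> Mvalid t \<and> (\<forall>x\<in>set t. \<forall>e\<in>set B. x < e) \<Longrightarrow>
      c \<notin> set t \<Longrightarrow> t2 \<noteq> [] \<Longrightarrow> suffix t2 t \<Longrightarrow> Q123 (c # t2 @ B) = QM (c # t2)"
  proof -
    fix c t t2 assume c: "c \<in> {x. \<forall>e\<in>set B. x < e}" and I: "Mvalid t \<and> (\<forall>x\<in>set t. \<forall>e\<in>set B. x < e)"
      and ct: "c \<notin> set t" and ne: "t2 \<noteq> []" and suf: "suffix t2 t"
    have sub: "set t2 \<subseteq> set t" using suf set_mono_suffix by blast
    from Mvalid_suffix[OF conjunct1[OF I] ne suf] show "Q123 (c # t2 @ B) = QM (c # t2)"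
    proof (elim disjE exE conjE)
      fix y assume t2: "t2 = [y]"
      then have "y \<in> set t" using sub by auto
      then have "c \<noteq> y" "\<forall>e\<in>set B. y < e" using ct I by auto
      then show ?thesis using t2 c B by (auto simp: Q123_def QM_def)
    next
      fix y w assume t2: "t2 = [y, w]" "w < y"
      then have "y \<in> set t" "w \<in> set t" using sub by auto
      then have "c \<noteq> y" "\<forall>e\<in>set B. y < e" "\<forall>e\<in>set B. w < e" using ct I by auto
      then show ?thesis using t2 c B by (auto simp: Q123_def QM_def)
    qed
  qed
  show "Mvalid (fst (feedP QM c (t', ot))) \<and> (\<forall>x\<in>set (fst (feedP QM c (t', ot))). \<forall>e\<in>set B. x < e)"
    if "c \<in> {x. \<forall>e\<in>set B. x < e}" "Mvalid t' \<and> (\<forall>x\<in>set t'. \<forall>e\<in>set B. x < e)" for c t' ot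
  proof
    show "Mvalid (fst (feedP QM c (t', ot)))" by (rule Mvalid_feed)
    show "\<forall>x\<in>set (fst (feedP QM c (t', ot))). \<forall>e\<in>set B. x < e"
      using feed_set[of QM c t' ot] that by auto
  qed
  show "Mvalid t \<and> (\<forall>x\<in>set t. \<forall>e\<in>set B. x < e)" using assms by auto
qed (use assms in auto)


lemma Mrun_max_first:
  assumes "w \<noteq> []" "\<forall>e\<in>set w. e < m"
  shows "Mrun (m # w) = m # Mrun w"
proof -
  obtain c w' where w: "w = c # w'" using assms(1) by (cases w) auto
  have cm: "c < m" using assms w by auto
  have "fold (feedP QM) (m # w) ([],[]) = fold (feedP QM) w' ([c], [m] @ [])"
    using cm by (simp add: w QM_def)
  also have "\<dots> = (fst (fold (feedP QM) w' ([c], [])), [m] @ snd (fold (feedP QM) w' ([c], [])))"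
    by (rule fold_prefix)
  finally show ?thesis unfolding Mrun_def by (simp add: w view_def)
qed

lemma Mrun_max_second:
  assumes "a < m" "\<forall>e\<in>set w. e < m"
  shows "Mrun (a # m # w) = m # Mrun (a # w)"
proof (cases w)
  case Nil
  then show ?thesis using assms by (simp add: Mrun_def QM_def view_def)
next
  case (Cons c w')
  have cm: "c < m" using assms Cons by auto
  have "fold (feedP QM) (a # m # w) ([],[]) = fold (feedP QM) w' (feedP QM c ([a], [m] @ []))"
    using cm assms by (simp add: Cons QM_def)
  also have "\<dots> = fold (feedP QM) w' (fst (feedP QM c ([a], [])), [m] @ snd (feedP QM c ([a], [])))"
    by (simp only: feed_prefix)
  also have "\<dots> = (fst (fold (feedP QM) w' (feedP QM c ([a], []))), [m] @ snd (fold (feedP QM) w' (feedP QM c ([a], []))))"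
    using fold_prefix[of QM w' "fst (feedP QM c ([a], []))" "[m]" "snd (feedP QM c ([a], []))"] by simp
  finally show ?thesis unfolding Mrun_def by (simp add: Cons view_def)
qed

lemma M_bot_step:
  assumes "c \<noteq> \<beta>"
  shows "\<exists>t' \<beta>' r. feedP QM c (t @ [\<beta>], ot) = (t' @ [\<beta>'], ot @ r) \<and> (\<beta>' = \<beta> \<or> (\<beta>' = c \<and> c < \<beta> \<and> \<beta> \<in> set r))"
proof -
  from feed_split[of QM c t "[\<beta>]" ot] show ?thesis
  proof
    assume e: "feedP QM c (t @ [\<beta>], ot) = feedP QM c ([\<beta>], ot @ t)"
    show ?thesis
    proof (cases "\<beta> < c")
      case True
      then show ?thesis using e by (intro exI[of _ "[c]"] exI[of _ \<beta>] exI[of _ t]) (simp add: QM_def)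
    next
      case False
      then show ?thesis using e assms by (intro exI[of _ "[]"] exI[of _ c] exI[of _ "t @ [\<beta>]"]) (simp add: QM_def)
    qed
  next
    assume "\<exists>t1 t2. t = t1 @ t2 \<and> t2 \<noteq> [] \<and> QM (c # t2 @ [\<beta>]) \<and> feedP QM c (t @ [\<beta>], ot) = (c # t2 @ [\<beta>], ot @ t1)"
    then obtain t1 t2 where "feedP QM c (t @ [\<beta>], ot) = (c # t2 @ [\<beta>], ot @ t1)" by blast
    then show ?thesis by (intro exI[of _ "c # t2"] exI[of _ \<beta>] exI[of _ t1]) simp
  qed
qed

lemma M_bot_fold:
  "distinct xs \<Longrightarrow> \<beta> \<notin> set xs \<Longrightarrow> \<exists>t' \<beta>' r. fold (feedP QM) xs (t @ [\<beta>], ot) = (t' @ [\<beta>'], ot @ r) \<and> \<beta>' \<le> \<beta>"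
proof (induction xs arbitrary: t \<beta> ot)
  case Nil then show ?case by (intro exI[of _ t] exI[of _ \<beta>] exI[of _ "[]"]) simp
next
  case (Cons c xs)
  obtain t1 \<beta>1 r1 where s: "feedP QM c (t @ [\<beta>], ot) = (t1 @ [\<beta>1], ot @ r1)" "\<beta>1 = \<beta> \<or> (\<beta>1 = c \<and> c < \<beta> \<and> \<beta> \<in> set r1)"
    using M_bot_step[of c \<beta> t ot] Cons.prems by auto
  have "\<beta>1 \<notin> set xs" using s(2) Cons.prems by auto
  then obtain t2 \<beta>2 r2 where "fold (feedP QM) xs (t1 @ [\<beta>1], ot @ r1) = (t2 @ [\<beta>2], (ot @ r1) @ r2)" "\<beta>2 \<le> \<beta>1"
    using Cons.IH[of \<beta>1 t1 "ot @ r1"] Cons.prems by auto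
  then show ?case using s by (intro exI[of _ t2] exI[of _ \<beta>2] exI[of _ "r1 @ r2"]) auto
qed

lemma M_push_max:
  assumes "f \<in> set ot" "\<beta> < f" "f < m" "m \<noteq> \<beta>"
  shows "\<exists>t'' \<beta>' ot'. feedP QM m (t @ [\<beta>], ot) = (m # t'' @ [\<beta>'], ot') \<and> f \<in> set ot' \<and> \<beta>' < f"
proof -
  obtain t' \<beta>' r where s: "feedP QM m (t @ [\<beta>], ot) = (t' @ [\<beta>'], ot @ r)" "\<beta>' = \<beta> \<or> (\<beta>' = m \<and> m < \<beta> \<and> \<beta> \<in> set r)"
    using M_bot_step[of m \<beta> t ot] assms by auto
  have b: "\<beta>' = \<beta>" using s(2) assms by auto
  obtain s1 s2 where "feedP QM m (t @ [\<beta>], ot) = (m # s2, ot @ s1)" using feed_struct by blast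
  then have "t' @ [\<beta>'] = m # s2" using s by simp
  moreover have "m \<noteq> \<beta>'" using b assms by simp
  ultimately obtain t'' where "t' = m # t''" by (cases t') auto
  then show ?thesis using s b assms by auto
qed

lemma M_not_W:
  assumes d: "distinct (z1 # z2 # r)" and mr: "m \<in> set r" and mx: "\<forall>e\<in>set (z1 # z2 # r). e \<le> m"
  shows "\<not> W (Mrun (z1 # z2 # r))"
proof -
  obtain r1 r2 where r: "r = r1 @ m # r2" using mr by (meson split_list)
  have "z1 \<noteq> m" "z2 \<noteq> m" using d mr by auto
  moreover have "z1 \<le> m" "z2 \<le> m" using mx by auto
  ultimately have zm: "z1 < m" "z2 < m" by auto
  have "\<exists>t \<beta> ot f. fold (feedP QM) (z1 # z2 # r1) ([],[]) = (t @ [\<beta>], ot) \<and> f \<in> set ot \<and> \<beta> < f \<and> f < m \<and> m \<noteq> \<beta>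
        \<or> (r1 = [] \<and> fold (feedP QM) (z1 # z2 # r1) ([],[]) = ([z2, z1], []) \<and> z1 < z2)"
  proof (cases "z1 < z2")
    case False
    then have z21: "z2 < z1" using d by auto
    have s2: "fold (feedP QM) [z1, z2] ([],[]) = ([] @ [z2], [] @ [z1])" using z21 by (simp add: QM_def)
    obtain t' \<beta>' rr where "fold (feedP QM) r1 ([] @ [z2], [] @ [z1]) = (t' @ [\<beta>'], ([] @ [z1]) @ rr)" "\<beta>' \<le> z2"
      using M_bot_fold[of r1 z2 "[]" "[] @ [z1]"] d r by auto
    then show ?thesis using s2 z21 zm by (intro exI[of _ t'] exI[of _ \<beta>'] exI[of _ "z1 # rr"] exI[of _ z1] disjI1) auto
  next
    case True
    show ?thesis
    proof (cases r1)
      case Nil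
      then show ?thesis using True by (simp add: QM_def)
    next
      case (Cons c r1')
      have cz: "c \<noteq> z1" using d r Cons by auto
      have s3: "fold (feedP QM) [z1, z2, c] ([],[]) = feedP QM c ([] @ [z1], [z2])" using True by (simp add: QM_def)
      obtain t1 \<beta>1 rr1 where a1: "feedP QM c ([] @ [z1], [z2]) = (t1 @ [\<beta>1], [z2] @ rr1)" "\<beta>1 = z1 \<or> (\<beta>1 = c \<and> c < z1 \<and> z1 \<in> set rr1)"
        using M_bot_step[of c z1 "[]" "[z2]"] cz by auto
      have "\<beta>1 \<notin> set r1'" using a1(2) d r Cons by auto
      then obtain t2 \<beta>2 rr2 where a2: "fold (feedP QM) r1' (t1 @ [\<beta>1], [z2] @ rr1) = (t2 @ [\<beta>2], ([z2] @ rr1) @ rr2)" "\<beta>2 \<le> \<beta>1"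
        using M_bot_fold[of r1' \<beta>1 t1 "[z2] @ rr1"] d r Cons by auto
      have "\<beta>1 \<le> z1" using a1(2) by auto
      then have "fold (feedP QM) (z1 # z2 # r1) ([],[]) = (t2 @ [\<beta>2], z2 # rr1 @ rr2)"
        using s3 a1 a2 Cons by simp
      then show ?thesis using a2 \<open>\<beta>1 \<le> z1\<close> True zm
        by (intro exI[of _ t2] exI[of _ \<beta>2] exI[of _ "z2 # rr1 @ rr2"] exI[of _ z2] disjI1) auto
    qed
  qed
  then obtain v where v: "subseq v (view (feedP QM m (fold (feedP QM) (z1 # z2 # r1) ([],[]))))"
      and bca: "\<exists>b c a. subseq [b,c,a] v \<and> a < b \<and> b < c"
  proof (elim exE disjE conjE)
    fix t \<beta> ot f assume S: "fold (feedP QM) (z1 # z2 # r1) ([],[]) = (t @ [\<beta>], ot)" "f \<in> set ot" "\<beta> < f" "f < m" "m \<noteq> \<beta>"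
    obtain t'' \<beta>' ot' where P: "feedP QM m (t @ [\<beta>], ot) = (m # t'' @ [\<beta>'], ot')" "f \<in> set ot'" "\<beta>' < f"
      using M_push_max[OF S(2-5)] by blast
    obtain o1 o2 where "ot' = o1 @ f # o2" using P(2) by (meson split_list)
    then have "subseq [f, m, \<beta>'] (view (feedP QM m (fold (feedP QM) (z1 # z2 # r1) ([],[]))))"
      using S P by (simp add: view_def subseq_drop_many)
    moreover have "\<exists>b c a. subseq [b,c,a] [f, m, \<beta>'] \<and> a < b \<and> b < c"
      using P S by (intro exI[of _ f] exI[of _ m] exI[of _ \<beta>']) simp
    ultimately show ?thesis by (rule that)
  next
    assume S: "r1 = []" "fold (feedP QM) (z1 # z2 # r1) ([],[]) = ([z2, z1], [])" "z1 < z2"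
    have "view (feedP QM m ([z2, z1], [])) = [z2, m, z1]" using S zm by (simp add: QM_def view_def)
    then have "subseq [z2, m, z1] (view (feedP QM m (fold (feedP QM) (z1 # z2 # r1) ([],[]))))"
      using S by simp
    moreover have "\<exists>b c a. subseq [b,c,a] [z2, m, z1] \<and> a < b \<and> b < c"
      using S zm by (intro exI[of _ z2] exI[of _ m] exI[of _ z1]) simp
    ultimately show ?thesis by (rule that)
  qed
  have "Mrun (z1 # z2 # r) = view (fold (feedP QM) r2 (feedP QM m (fold (feedP QM) (z1 # z2 # r1) ([],[]))))"
    unfolding Mrun_def r by simp
  then have sv: "subseq (view (feedP QM m (fold (feedP QM) (z1 # z2 # r1) ([],[])))) (Mrun (z1 # z2 # r))"
    using view_fold_subseq by metis
  have dist: "distinct (Mrun (z1 # z2 # r))" unfolding Mrun_def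
    by (rule view_fold_distinct) (use d in \<open>auto simp: view_def\<close>)
  from bca obtain b c a where "subseq [b,c,a] v" "a < b" "b < c" by blast
  then show ?thesis using W_subseq231[of b c a v] v sv dist subseq_order.order_trans by blast
qed



definition sw :: "nat \<Rightarrow> nat" where "sw v = (if v = 1 then 2 else if v = 2 then 1 else v)"

lemma swap12_sw: "swap12 x = map sw x"
  unfolding swap12_def sw_def by simp

lemma sw_ge3: "3 \<le> v \<Longrightarrow> sw v = v" by (simp add: sw_def)
lemma sw_lt: "e < m \<Longrightarrow> 3 \<le> m \<Longrightarrow> sw e < m" by (simp add: sw_def)
lemma sw_inj: "sw a = sw b \<longleftrightarrow> a = b" by (auto simp: sw_def)
lemma sw_0: "sw 0 = 0" by (simp add: sw_def)
lemma distinct_sw: "distinct (map sw z) = distinct z"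
  by (simp add: distinct_map inj_on_def sw_inj)
lemma set_sw: "1 \<in> set z \<Longrightarrow> 2 \<in> set z \<Longrightarrow> set (map sw z) = set z"
  by (auto simp: sw_def image_iff)

lemma Mrun_set: "set (Mrun z) = set z"
  unfolding Mrun_def using view_fold_set[of QM z "([],[])"] by (simp add: view_def)

lemma Mrun_distinct: "distinct z \<Longrightarrow> distinct (Mrun z)"
  unfolding Mrun_def by (rule view_fold_distinct) (auto simp: view_def)

lemma M_swap:
  "distinct z \<Longrightarrow> 0 \<notin> set z \<Longrightarrow> 1 \<in> set z \<Longrightarrow> 2 \<in> set z \<Longrightarrow> W (Mrun z) \<Longrightarrow> Mrun (map sw z) = Mrun z"
proof (induction "length z" arbitrary: z rule: less_induct)
  case less
  have sub: "set z \<subseteq> {1,2} \<Longrightarrow> length z \<le> 2"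
    using less.prems(1) card_mono[of "{1,2::nat}" "set z"] distinct_card[of z] by auto
  show ?case
  proof (cases "set z \<subseteq> {1,2}")
    case True
    then have "length z \<le> 2" by (rule sub)
    moreover have "card {1,2::nat} \<le> card (set z)" using less.prems(3,4) by (intro card_mono) auto
    then have "card (set z) \<ge> 2" by simp
    ultimately have "length z = 2" using distinct_card[OF less.prems(1)] by auto
    then obtain p q where z: "z = [p,q]" by (rule len2E)
    then have "z = [1,2] \<or> z = [2,1]" using less.prems True by auto
    then show ?thesis by (auto simp: Mrun_def QM_def view_def sw_def)
  next
    case False
    then obtain e where e: "e \<in> set z" "e \<notin> {1,2}" by blast
    have "e \<noteq> 0" using e(1) less.prems(2) by metis
    then have e3: "3 \<le> e" using e(2) by auto
    define m where "m = Max (set z)"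
    have "set z \<noteq> {}" using e by auto
    then have mz: "m \<in> set z" unfolding m_def by (intro Max_in) auto
    have mx: "\<forall>x\<in>set z. x \<le> m" unfolding m_def by simp
    have m3: "3 \<le> m" using e e3 mx by fastforce
    have len: "length z \<ge> 3"
    proof -
      have "{1,2,m} \<subseteq> set z" using less.prems mz by auto
      then have "card {1,2,m} \<le> card (set z)" by (simp add: card_mono)
      moreover have "card {1,2,m} = 3" using m3 by auto
      ultimately show ?thesis using distinct_card[OF less.prems(1)] by auto
    qed
    then obtain z1 z2 r where z: "z = z1 # z2 # r"
      by (metis Suc_le_length_iff numeral_3_eq_3)
    have lt: "\<forall>x\<in>set z. x \<noteq> m \<longrightarrow> x < m" using mx by auto
    consider (a) "m = z1" | (b) "m = z2" | (c) "m \<in> set r" using mz z by auto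
    then show ?thesis
    proof cases
      case c
      then have "\<not> W (Mrun z)" using M_not_W[of z1 z2 r m] less.prems mx z by auto
      then show ?thesis using less.prems by simp
    next
      case a
      define w where "w = z2 # r"
      have wlt: "\<forall>x\<in>set w. x < m" using lt less.prems(1) a z w_def by auto
      have e1: "Mrun z = m # Mrun w" using Mrun_max_first[of w m] wlt a z w_def by simp
      have "W (Mrun w)"
        using W_decomp(2)[of "[]" m "Mrun w"] less.prems(5) e1 wlt Mrun_set[of w] Mrun_distinct[of w] less.prems(1) z w_def
        by auto
      moreover have "length w < length z" using z w_def by simp
      moreover have "distinct w" "0 \<notin> set w" "1 \<in> set w" "2 \<in> set w" using less.prems z a m3 w_def by auto
      ultimately have ih: "Mrun (map sw w) = Mrun w" using less.hyps by blast
      have "map sw z = m # map sw w" using z a w_def sw_ge3[OF m3] by simp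
      moreover have "Mrun (m # map sw w) = m # Mrun (map sw w)"
        using Mrun_max_first[of "map sw w" m] wlt sw_lt[OF _ m3] w_def by auto
      ultimately show ?thesis using e1 ih by simp
    next
      case b
      define w where "w = z1 # r"
      have wlt: "\<forall>x\<in>set w. x < m" using lt less.prems(1) b z w_def by auto
      have e1: "Mrun z = m # Mrun w" using Mrun_max_second[of z1 m r] wlt b z w_def by simp
      have "W (Mrun w)"
        using W_decomp(2)[of "[]" m "Mrun w"] less.prems(5) e1 wlt Mrun_set[of w] Mrun_distinct[of w] less.prems(1) z w_def
        by auto
      moreover have "length w < length z" using z w_def by simp
      moreover have "distinct w" "0 \<notin> set w" "1 \<in> set w" "2 \<in> set w" using less.prems z b m3 w_def by auto
      ultimately have ih: "Mrun (map sw w) = Mrun w" using less.hyps by blast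
      have "map sw z = sw z1 # m # map sw r" using z b sw_ge3[OF m3] by simp
      moreover have "Mrun (sw z1 # m # map sw r) = m # Mrun (sw z1 # map sw r)"
        using Mrun_max_second[of "sw z1" m "map sw r"] wlt sw_lt[OF _ m3] w_def by auto
      ultimately show ?thesis using e1 ih w_def by simp
    qed
  qed
qed



lemma q2: "Q123 [c, y]" by (simp add: Q123_def)
lemma q3a: "v < a \<Longrightarrow> c \<noteq> v \<Longrightarrow> Q123 [c,v,a] \<longleftrightarrow> v < c" by (auto simp: Q123_def)
lemma q3b: "a < n \<Longrightarrow> c < n \<Longrightarrow> Q123 [c, n, a]" by (auto simp: Q123_def)
lemma q3c: "v < n \<Longrightarrow> a < n \<Longrightarrow> v \<noteq> a \<Longrightarrow> Q123 [n, v, a] \<longleftrightarrow> v < a" by (auto simp: Q123_def)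
lemma q4: "u < a \<Longrightarrow> a < n \<Longrightarrow> c < n \<Longrightarrow> c \<noteq> u \<Longrightarrow> c \<noteq> a \<Longrightarrow> Q123 [c, n, u, a] \<longleftrightarrow> u < c"
  by (auto simp: Q123_def)

lemma Q123_len:
  assumes "distinct (m # L)" "\<forall>e\<in>set L. e < m" "Q123 (m # L)"
  shows "length L \<le> 2"
proof (rule ccontr)
  assume "\<not> length L \<le> 2"
  then obtain y1 y2 y3 r where L: "L = y1 # y2 # y3 # r"
    by (metis Suc_le_length_iff not_less_eq_eq numeral_2_eq_2)
  have lt: "y1 < m" "y2 < m" "y3 < m" using assms(2) L by auto
  have d: "y1 \<noteq> y2" "y2 \<noteq> y3" "y1 \<noteq> y3" using assms(1) L by auto
  have n321: "\<not> has321 (m # L)" using assms(3) by (simp add: Q123_def)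
  have n123: "\<not> has123 (m # L)" using assms(3) by (simp add: Q123_def)
  have "\<not> y2 < y1" using n321 lt L by auto
  moreover have "\<not> y3 < y2" using n321 lt L by auto
  ultimately have "y1 < y2" "y2 < y3" using d by auto
  then have "has123 (m # L)" using L by auto
  then show False using n123 by simp
qed

lemma top_split: "fst (feedP Q c S) = t @ B \<Longrightarrow> c \<notin> set B \<Longrightarrow> \<exists>t'. t = c # t'"
proof -
  assume a: "fst (feedP Q c S) = t @ B" "c \<notin> set B"
  obtain s ot where S: "S = (s, ot)" by fastforce
  obtain s1 s2 where "feedP Q c (s, ot) = (c # s2, ot @ s1)" using feed_struct by blast
  then have "c # s2 = t @ B" using a S by simp
  then show ?thesis using a(2) by (cases t) auto
qed

lemma G_bot_step: "\<exists>t' r. feedP Q123 c (t @ [a], ot) = (t' @ [a], ot @ r)"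
proof -
  from feed_split[of Q123 c t "[a]" ot] show ?thesis
  proof
    assume "feedP Q123 c (t @ [a], ot) = feedP Q123 c ([a], ot @ t)"
    then show ?thesis using q2[of c a] by simp
  next
    assume "\<exists>t1 t2. t = t1 @ t2 \<and> t2 \<noteq> [] \<and> Q123 (c # t2 @ [a]) \<and> feedP Q123 c (t @ [a], ot) = (c # t2 @ [a], ot @ t1)"
    then obtain t1 t2 where "feedP Q123 c (t @ [a], ot) = (c # t2 @ [a], ot @ t1)" by blast
    then show ?thesis by (intro exI[of _ "c # t2"] exI[of _ t1]) simp
  qed
qed

lemma G_bot_fold: "\<exists>t' r. fold (feedP Q123) xs (t @ [a], ot) = (t' @ [a], ot @ r)"
proof (induction xs arbitrary: t ot)
  case (Cons c xs)
  obtain t1 r1 where "feedP Q123 c (t @ [a], ot) = (t1 @ [a], ot @ r1)" using G_bot_step by blast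
  moreover obtain t2 r2 where "fold (feedP Q123) xs (t1 @ [a], ot @ r1) = (t2 @ [a], (ot @ r1) @ r2)"
    using Cons.IH by blast
  ultimately show ?case by (intro exI[of _ t2] exI[of _ "r1 @ r2"]) simp
qed simp

lemma SB_step:
  assumes "c \<noteq> v" "v < a"
  shows "\<exists>t' v' r. feedP Q123 c (t @ [v, a], ot) = (t' @ [v', a], ot @ r) \<and> (v' = v \<or> (v' = c \<and> c < v \<and> v \<in> set r))"
proof -
  from feed_split[of Q123 c t "[v, a]" ot] show ?thesis
  proof
    assume e: "feedP Q123 c (t @ [v, a], ot) = feedP Q123 c ([v, a], ot @ t)"
    show ?thesis
    proof (cases "v < c")
      case True
      then have "Q123 [c, v, a]" using q3a[of v a c] assms by simp
      then show ?thesis using e by (intro exI[of _ "[c]"] exI[of _ v] exI[of _ t]) simp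
    next
      case False
      then have "\<not> Q123 [c, v, a]" using q3a[of v a c] assms by simp
      then show ?thesis using e assms False q2[of c a]
        by (intro exI[of _ "[]"] exI[of _ c] exI[of _ "t @ [v]"]) simp
    qed
  next
    assume "\<exists>t1 t2. t = t1 @ t2 \<and> t2 \<noteq> [] \<and> Q123 (c # t2 @ [v, a]) \<and> feedP Q123 c (t @ [v, a], ot) = (c # t2 @ [v, a], ot @ t1)"
    then obtain t1 t2 where "feedP Q123 c (t @ [v, a], ot) = (c # t2 @ [v, a], ot @ t1)" by blast
    then show ?thesis by (intro exI[of _ "c # t2"] exI[of _ v] exI[of _ t1]) simp
  qed
qed

lemma SB_fold:
  "distinct xs \<Longrightarrow> v \<notin> set xs \<Longrightarrow> v < a \<Longrightarrow>
   \<exists>t' v' r. fold (feedP Q123) xs (t @ [v, a], ot) = (t' @ [v', a], ot @ r) \<and> v' \<le> v \<and> (v' = v \<or> v \<in> set r)"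
proof (induction xs arbitrary: t v ot)
  case Nil then show ?case by (intro exI[of _ t] exI[of _ v] exI[of _ "[]"]) simp
next
  case (Cons c xs)
  obtain t1 v1 r1 where s: "feedP Q123 c (t @ [v, a], ot) = (t1 @ [v1, a], ot @ r1)" "v1 = v \<or> (v1 = c \<and> c < v \<and> v \<in> set r1)"
    using SB_step[of c v a t ot] Cons.prems by auto
  have "v1 \<notin> set xs" "v1 < a" using s(2) Cons.prems by auto
  then obtain t2 v2 r2 where f: "fold (feedP Q123) xs (t1 @ [v1, a], ot @ r1) = (t2 @ [v2, a], (ot @ r1) @ r2)" "v2 \<le> v1" "v2 = v1 \<or> v1 \<in> set r2"
    using Cons.IH[of v1 t1 "ot @ r1"] Cons.prems by auto
  show ?case using s f by (intro exI[of _ t2] exI[of _ v2] exI[of _ "r1 @ r2"]) auto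
qed

lemma NA_step:
  assumes "c < n" "a < n" "c \<noteq> a"
  shows "\<exists>t' r. feedP Q123 c (t @ [n, a], ot) = (t' @ [n, a], ot @ r)"
proof -
  from feed_split[of Q123 c t "[n, a]" ot] show ?thesis
  proof
    assume e: "feedP Q123 c (t @ [n, a], ot) = feedP Q123 c ([n, a], ot @ t)"
    have "Q123 [c, n, a]" using q3b assms by blast
    then show ?thesis using e by (intro exI[of _ "[c]"] exI[of _ t]) simp
  next
    assume "\<exists>t1 t2. t = t1 @ t2 \<and> t2 \<noteq> [] \<and> Q123 (c # t2 @ [n, a]) \<and> feedP Q123 c (t @ [n, a], ot) = (c # t2 @ [n, a], ot @ t1)"
    then obtain t1 t2 where "feedP Q123 c (t @ [n, a], ot) = (c # t2 @ [n, a], ot @ t1)" by blast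
    then show ?thesis by (intro exI[of _ "c # t2"] exI[of _ t1]) simp
  qed
qed

lemma NA_fold: "\<forall>c\<in>set xs. c < n \<and> c \<noteq> a \<Longrightarrow> a < n \<Longrightarrow> \<exists>t' r. fold (feedP Q123) xs (t @ [n, a], ot) = (t' @ [n, a], ot @ r)"
proof (induction xs arbitrary: t ot)
  case (Cons c xs)
  have "c < n" "c \<noteq> a" using Cons.prems by auto
  then obtain t1 r1 where e1: "feedP Q123 c (t @ [n, a], ot) = (t1 @ [n, a], ot @ r1)" using NA_step Cons.prems(2) by blast
  have "\<forall>c\<in>set xs. c < n \<and> c \<noteq> a" using Cons.prems by auto
  then obtain t2 r2 where e2: "fold (feedP Q123) xs (t1 @ [n, a], ot @ r1) = (t2 @ [n, a], (ot @ r1) @ r2)"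
    using Cons.IH Cons.prems(2) by blast
  show ?case using e1 e2 by (intro exI[of _ t2] exI[of _ "r1 @ r2"]) simp
qed auto

definition NUA :: "nat \<Rightarrow> nat \<Rightarrow> nat \<Rightarrow> nat list \<times> nat list \<Rightarrow> bool" where
  "NUA n u a S = ((\<exists>t. fst S = t @ [n, u, a]) \<or> (\<exists>t v. fst S = t @ [v, a] \<and> v < u \<and> u \<in> set (snd S)))"

lemma NUA_step:
  assumes "NUA n u a S" "c \<notin> set (view S)" "c < n" "u < a" "a < n"
  shows "NUA n u a (feedP Q123 c S)"
proof -
  obtain st ot where S: "S = (st, ot)" by fastforce
  have cst: "c \<notin> set st" "c \<notin> set ot" using assms(2) S by (auto simp: view_def)
  from assms(1)[unfolded NUA_def S] show ?thesis
  proof (elim disjE exE conjE)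
    fix t assume st: "fst (st, ot) = t @ [n, u, a]"
    have cu: "c \<noteq> u" "c \<noteq> a" using cst st by auto
    from feed_split[of Q123 c t "[n, u, a]" ot] show ?thesis
    proof
      assume e: "feedP Q123 c (t @ [n, u, a], ot) = feedP Q123 c ([n, u, a], ot @ t)"
      show ?thesis
      proof (cases "u < c")
        case True
        then have "Q123 [c, n, u, a]" using q4[of u a n c] assms cu by simp
        then show ?thesis using e st S by (simp add: NUA_def)
      next
        case False
        then have cu': "c < u" using cu by auto
        then have "\<not> Q123 [c, n, u, a]" "\<not> Q123 [c, u, a]" using q4[of u a n c] q3a[of u a c] assms cu by auto
        then have "feedP Q123 c ([n, u, a], ot @ t) = ([c, a], ot @ t @ [n, u])" using q2[of c a] by simp
        then show ?thesis using e st S cu' by (simp add: NUA_def)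
      qed
    next
      assume "\<exists>t1 t2. t = t1 @ t2 \<and> t2 \<noteq> [] \<and> Q123 (c # t2 @ [n, u, a]) \<and> feedP Q123 c (t @ [n, u, a], ot) = (c # t2 @ [n, u, a], ot @ t1)"
      then obtain t1 t2 where "feedP Q123 c (t @ [n, u, a], ot) = (c # t2 @ [n, u, a], ot @ t1)" by blast
      then show ?thesis using st S by (simp add: NUA_def)
    qed
  next
    fix t v assume st: "fst (st, ot) = t @ [v, a]" "v < u" "u \<in> set (snd (st, ot))"
    have "c \<noteq> v" using cst st by auto
    then obtain t' v' r where "feedP Q123 c (t @ [v, a], ot) = (t' @ [v', a], ot @ r)" "v' = v \<or> (v' = c \<and> c < v \<and> v \<in> set r)"
      using SB_step[of c v a t ot] st assms by auto
    then show ?thesis using st S unfolding NUA_def by auto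
  qed
qed

lemma NUA_fold:
  "NUA n u a S \<Longrightarrow> distinct xs \<Longrightarrow> set xs \<inter> set (view S) = {} \<Longrightarrow> \<forall>c\<in>set xs. c < n \<Longrightarrow> u < a \<Longrightarrow> a < n \<Longrightarrow>
   NUA n u a (fold (feedP Q123) xs S)"
proof (induction xs arbitrary: S)
  case (Cons c xs)
  have "NUA n u a (feedP Q123 c S)" using NUA_step Cons.prems by auto
  moreover have "set xs \<inter> set (view (feedP Q123 c S)) = {}" using Cons.prems view_feed_set[of Q123 c S] by auto
  ultimately show ?case using Cons by simp
qed simp

definition run :: "nat list \<Rightarrow> nat list \<times> nat list" where
  "run xs = fold (feedP Q123) xs ([],[])"

lemma run_append: "run (xs @ ys) = fold (feedP Q123) ys (run xs)"
  by (simp add: run_def)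

lemma s_run: "s_123_321 x = view (run x)"
  by (simp add: s_eq run_def)

lemma run_set: "set (view (run xs)) = set xs"
  unfolding run_def using view_fold_set[of Q123 xs "([],[])"] by (simp add: view_def)

lemma run_distinct: "distinct xs \<Longrightarrow> distinct (view (run xs))"
  unfolding run_def by (rule view_fold_distinct) (auto simp: view_def)

lemma bad_prefix:
  assumes "subseq [b,c,a] (view (run xs))" "a < b" "b < c" "distinct (xs @ ys)"
  shows "\<not> W (s_123_321 (xs @ ys))"
proof -
  have "subseq (view (run xs)) (s_123_321 (xs @ ys))"
    unfolding s_run run_append using view_fold_subseq by metis
  moreover have "distinct (s_123_321 (xs @ ys))" unfolding s_run using run_distinct assms(4) by blast
  ultimately show ?thesis using W_subseq231[OF assms(1) _ assms(2,3)] by blast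
qed

lemma run_M:
  assumes r: "run p = (B, Ot)" and B: "B = [b] \<or> (B = [b, b'] \<and> b' < b)"
    and lt: "\<forall>x \<in> set z. \<forall>e\<in>set B. x < e" and d: "distinct z"
  shows "s_123_321 (p @ z) = Ot @ Mrun z @ B"
proof -
  have "fold (feedP Q123) z ([] @ B, Ot) = (fst (fold (feedP QM) z ([], Ot)) @ B, snd (fold (feedP QM) z ([], Ot)))"
    by (rule M_embed[OF B]) (use lt d in \<open>auto simp: Mvalid_def\<close>)
  moreover have "fold (feedP QM) z ([], Ot @ []) = (fst (fold (feedP QM) z ([], [])), Ot @ snd (fold (feedP QM) z ([], [])))"
    by (rule fold_prefix)
  ultimately show ?thesis unfolding s_run run_append r Mrun_def by (simp add: view_def)
qed

lemma run_M1:
  assumes r: "run p = ([c] @ B, Ot)" and B: "B = [b] \<or> (B = [b, b'] \<and> b' < b)"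
    and lt: "\<forall>x \<in> set (c # z). \<forall>e\<in>set B. x < e" and d: "distinct (c # z)"
  shows "s_123_321 (p @ z) = Ot @ Mrun (c # z) @ B"
proof -
  have "fold (feedP Q123) z ([c] @ B, Ot) = (fst (fold (feedP QM) z ([c], Ot)) @ B, snd (fold (feedP QM) z ([c], Ot)))"
    by (rule M_embed[OF B]) (use lt d in \<open>auto simp: Mvalid_def\<close>)
  moreover have "fold (feedP QM) z ([c], Ot @ []) = (fst (fold (feedP QM) z ([c], [])), Ot @ snd (fold (feedP QM) z ([c], [])))"
    by (rule fold_prefix)
  moreover have "fold (feedP QM) (c # z) ([],[]) = fold (feedP QM) z ([c], [])" by simp
  ultimately show ?thesis unfolding s_run run_append r Mrun_def by (simp add: view_def)
qed



lemma sub3: "subseq [f, c, b] (A @ f # B @ c # C @ b # D)"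
proof -
  have "subseq [b] (C @ b # D)" by (simp add: subseq_singleton_left)
  then have "subseq [c, b] (c # C @ b # D)" by simp
  then have "subseq [c, b] (B @ c # C @ b # D)" by (rule subseq_drop_many)
  then have "subseq [f, c, b] (f # B @ c # C @ b # D)" by simp
  then show ?thesis by (rule subseq_drop_many)
qed

lemma W_sub: "\<forall>e\<in>set R. e < m \<Longrightarrow> distinct R \<Longrightarrow> W (m # R) \<Longrightarrow> W R"
  using W_decomp(2)[of "[]" m R] by simp

lemma W_pre: "\<forall>e\<in>set L. e < m \<Longrightarrow> W (L @ [m]) \<Longrightarrow> W L"
  using W_decomp(1)[of L m "[]"] by simp

lemma caseC:
  assumes n5: "n \<ge> 5" and d: "distinct (n # z)" and s: "set (n # z) = {1..n}" and Wx: "W (s_123_321 (n # z))"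
  shows "s_123_321 (n # z) = s_123_321 (swap12 (n # z))"
proof -
  have sz: "set z = {1..n} - {n}" using d s by auto
  have zn: "\<forall>e\<in>set z. e < n" "0 \<notin> set z" "1 \<in> set z" "2 \<in> set z" using n5 unfolding sz by auto
  have r: "run [n] = ([n], [])" by (simp add: run_def)
  have e1: "s_123_321 ([n] @ z) = [] @ Mrun z @ [n]"
    by (rule run_M[OF r, of n]) (use zn d in auto)
  have swz: "\<forall>e\<in>set (map sw z). e < n" using zn n5 sw_lt by auto
  have e2: "s_123_321 ([n] @ map sw z) = [] @ Mrun (map sw z) @ [n]"
    by (rule run_M[OF r, of n]) (use swz d in \<open>auto simp: distinct_sw\<close>)
  have "W (Mrun z)" using W_pre[of "Mrun z" n] Wx e1 zn Mrun_set[of z] by simp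
  then have "Mrun (map sw z) = Mrun z" using M_swap[of z] d zn by simp
  moreover have "swap12 (n # z) = [n] @ map sw z" using n5 by (simp add: swap12_sw sw_ge3)
  ultimately show ?thesis using e1 e2 by simp
qed


lemma caseB:
  assumes n5: "n \<ge> 5" and d: "distinct ((n-1) # n # z)" and s: "set ((n-1) # n # z) = {1..n}"
    and Wx: "W (s_123_321 ((n-1) # n # z))"
  shows "s_123_321 ((n-1) # n # z) = s_123_321 (swap12 ((n-1) # n # z))"
proof -
  have sz: "set z = {1..n} - {n-1, n}" using d s by auto
  have zn: "\<forall>e\<in>set z. e < n - 1" "0 \<notin> set z" "1 \<in> set z" "2 \<in> set z" using n5 unfolding sz by auto
  have r: "run [n-1, n] = ([n, n-1], [])" using q2[of n "n-1"] by (simp add: run_def)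
  have B: "[n, n-1] = [n] \<or> ([n, n-1] = [n, n-1] \<and> n - 1 < n)" using n5 by simp
  have e1: "s_123_321 ([n-1, n] @ z) = [] @ Mrun z @ [n, n-1]"
    by (rule run_M[OF r B]) (use zn d in auto)
  have swz: "\<forall>e\<in>set (map sw z). e < n - 1" using zn n5 sw_lt[of _ "n-1"] by auto
  have e2: "s_123_321 ([n-1, n] @ map sw z) = [] @ Mrun (map sw z) @ [n, n-1]"
    by (rule run_M[OF r B]) (use swz d in \<open>auto simp: distinct_sw\<close>)
  have "\<forall>e\<in>set (Mrun z). e < n" using zn Mrun_set[of z] by auto
  then have "W (Mrun z)"
    using W_decomp(1)[of "Mrun z" n "[n-1]"] Wx e1 n5 by simp
  then have "Mrun (map sw z) = Mrun z" using M_swap[of z] d zn by simp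
  moreover have "swap12 ((n-1) # n # z) = [n-1, n] @ map sw z" using n5 by (simp add: swap12_sw sw_ge3)
  ultimately show ?thesis using e1 e2 by simp
qed

lemma runA:
  assumes "n \<ge> 5" "c < n - 2"
  shows "run [n-1, n-2, n, c] = ([c] @ [n-1], [n, n-2])"
proof -
  have "Q123 [n-2, n-1]" by (rule q2)
  moreover have "Q123 [n, n-2, n-1]" using q3c[of "n-2" n "n-1"] assms by simp
  moreover have "\<not> Q123 [c, n, n-2, n-1]" using q4[of "n-2" "n-1" n c] assms by simp
  moreover have "\<not> Q123 [c, n-2, n-1]" using q3a[of "n-2" "n-1" c] assms by simp
  moreover have "Q123 [c, n-1]" by (rule q2)
  ultimately show ?thesis by (simp add: run_def)
qed

lemma caseA:
  assumes n5: "n \<ge> 5" and d: "distinct ((n-1) # (n-2) # n # c # z)" and s: "set ((n-1) # (n-2) # n # c # z) = {1..n}"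
    and Wx: "W (s_123_321 ((n-1) # (n-2) # n # c # z))"
  shows "s_123_321 ((n-1) # (n-2) # n # c # z) = s_123_321 (swap12 ((n-1) # (n-2) # n # c # z))"
proof -
  have sz: "set (c # z) = {1..n} - {n-2, n-1, n}" using d s by auto
  have zn: "\<forall>e\<in>set (c # z). e < n - 2" "0 \<notin> set (c # z)" "1 \<in> set (c # z)" "2 \<in> set (c # z)"
    using n5 unfolding sz by auto
  have c2: "c < n - 2" using zn by simp
  have B: "[n-1] = [n-1] \<or> ([n-1] = [n-1, n-1] \<and> n - 1 < n - 1)" by simp
  have e1: "s_123_321 ([n-1, n-2, n, c] @ z) = [n, n-2] @ Mrun (c # z) @ [n-1]"
    by (rule run_M1[OF runA[OF n5 c2] B]) (use zn d in auto)
  have swc: "sw c < n - 2" using sw_lt[OF c2] n5 by simp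
  have swz: "\<forall>e\<in>set (map sw (c # z)). e < n - 2" using zn n5 sw_lt[of _ "n-2"] by auto
  have e2: "s_123_321 ([n-1, n-2, n, sw c] @ map sw z) = [n, n-2] @ Mrun (sw c # map sw z) @ [n-1]"
    by (rule run_M1[OF runA[OF n5 swc] B]) (use swz d in \<open>auto simp: distinct_sw sw_inj\<close>)
  have ltM: "\<forall>e\<in>set (Mrun (c # z)). e < n - 2" using zn(1) Mrun_set[of "c # z"] by simp
  have lt1: "\<forall>e\<in>set ((n-2) # Mrun (c # z) @ [n-1]). e < n" using ltM n5 by auto
  have dM: "distinct (Mrun (c # z))" using Mrun_distinct d by simp
  have dR: "distinct ((n-2) # Mrun (c # z) @ [n-1])" using dM ltM n5 by fastforce
  have "W ((n-2) # Mrun (c # z) @ [n-1])"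
    using W_sub[OF lt1 dR] Wx e1 by simp
  moreover have "\<forall>e\<in>set ((n-2) # Mrun (c # z)). e < n - 1" using ltM n5 by auto
  ultimately have "W ((n-2) # Mrun (c # z))"
    using W_pre[of "(n-2) # Mrun (c # z)" "n-1"] by simp
  then have "W (Mrun (c # z))" using W_sub[of "Mrun (c # z)" "n-2"] ltM dM by simp
  then have "Mrun (map sw (c # z)) = Mrun (c # z)" using M_swap[of "c # z"] d zn by simp
  moreover have "swap12 ((n-1) # (n-2) # n # c # z) = [n-1, n-2, n, sw c] @ map sw z"
    using n5 by (simp add: swap12_sw sw_ge3)
  ultimately show ?thesis using e1 e2 by simp
qed


lemma run_bottom: "\<exists>t r. run (a # P) = (t @ [a], r)"
proof -
  have "run (a # P) = fold (feedP Q123) P ([] @ [a], [])" by (simp add: run_def)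
  then show ?thesis using G_bot_fold[of P "[]" a "[]"] by auto
qed

lemma case_low:
  assumes n5: "n \<ge> 5" and d: "distinct (a # P @ n # Q)" and s: "set (a # P @ n # Q) = {1..n}" and an: "a < n - 1"
  shows "\<not> W (s_123_321 (a # P @ n # Q))"
proof -
  have n1: "n - 1 \<in> set P \<or> n - 1 \<in> set Q"
  proof -
    have "n - 1 \<in> set (a # P @ n # Q)" using s n5 by auto
    then show ?thesis using an n5 by auto
  qed
  have allx: "\<forall>e\<in>set (a # P @ n # Q). e \<le> n" using s by auto
  have dPn: "distinct (a # P @ [n])" using d by auto
  obtain t r where S0: "run (a # P) = (t @ [a], r)" using run_bottom by blast
  have Sn: "run (a # P @ [n]) = feedP Q123 n (t @ [a], r)"
    using run_append[of "a # P" "[n]"] S0 by simp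
  have dV: "distinct (view (run (a # P @ [n])))" using run_distinct[OF dPn] .
  have sV: "set (view (run (a # P @ [n]))) = set (a # P @ [n])" by (rule run_set)
  have ltV: "\<forall>e\<in>set (view (run (a # P @ [n]))). e \<noteq> n \<longrightarrow> e < n"
  proof
    fix e assume "e \<in> set (view (run (a # P @ [n])))"
    then have "e \<in> set (a # P @ n # Q)" using sV by auto
    then have "e \<le> n" using allx by blast
    then show "e \<noteq> n \<longrightarrow> e < n" by auto
  qed
  obtain Ot where SC: "run (a # P @ [n]) = ([n, a], Ot) \<or> (\<exists>u. run (a # P @ [n]) = ([n, u, a], Ot) \<and> u < a)"
  proof -
    from feed_split[of Q123 n t "[a]" r] show ?thesis
    proof
      assume "feedP Q123 n (t @ [a], r) = feedP Q123 n ([a], r @ t)"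
      then have "run (a # P @ [n]) = ([n, a], r @ t)" using Sn q2[of n a] by simp
      then show ?thesis using that by blast
    next
      assume "\<exists>t1 t2. t = t1 @ t2 \<and> t2 \<noteq> [] \<and> Q123 (n # t2 @ [a]) \<and> feedP Q123 n (t @ [a], r) = (n # t2 @ [a], r @ t1)"
      then obtain t1 t2 where tt: "t2 \<noteq> []" "Q123 (n # t2 @ [a])" "run (a # P @ [n]) = (n # t2 @ [a], r @ t1)"
        using Sn by auto
      have dd: "distinct (n # t2 @ [a])" using dV tt(3) by (simp add: view_def)
      have "\<forall>e\<in>set (t2 @ [a]). e < n" using ltV tt(3) dd by (auto simp: view_def)
      then have "length (t2 @ [a]) \<le> 2" using Q123_len[OF dd] tt(2) by simp
      then obtain u where t2: "t2 = [u]" using tt(1) by (cases t2) auto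
      have "u < n" "a < n" "u \<noteq> a" using \<open>\<forall>e\<in>set (t2 @ [a]). e < n\<close> dd t2 by auto
      then have "u < a" using q3c[of u n a] tt(2) t2 by simp
      then show ?thesis using tt(3) t2 by (intro that[of "r @ t1"] disjI2 exI[of _ u]) simp
    qed
  qed
  show ?thesis
  proof (cases "n - 1 \<in> set P")
    case True
    have inV: "n - 1 \<in> set (view (run (a # P @ [n])))" using sV True by simp
    from SC show ?thesis
    proof (elim disjE exE conjE)
      assume e: "run (a # P @ [n]) = ([n, a], Ot)"
      then have "n - 1 \<in> set Ot" using inV an n5 by (auto simp: view_def)
      then obtain o1 o2 where "Ot = o1 @ (n-1) # o2" by (meson split_list)
      then have "subseq [n-1, n, a] (view (run (a # P @ [n])))"
        using e sub3[of "n-1" n a o1 o2 "[]" "[]"] by (simp add: view_def)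
      then show ?thesis using bad_prefix[of "n-1" n a "a # P @ [n]" Q] d an n5 by auto
    next
      fix u assume e: "run (a # P @ [n]) = ([n, u, a], Ot)" "u < a"
      then have "n - 1 \<in> set Ot" using inV an n5 by (auto simp: view_def)
      then obtain o1 o2 where "Ot = o1 @ (n-1) # o2" by (meson split_list)
      then have "subseq [n-1, n, a] (view (run (a # P @ [n])))"
        using e sub3[of "n-1" n a o1 o2 "[u]" "[]"] by (simp add: view_def)
      then show ?thesis using bad_prefix[of "n-1" n a "a # P @ [n]" Q] d an n5 by auto
    qed
  next
    case False
    then have "n - 1 \<in> set Q" using n1 by simp
    then obtain Q1 Q2 where Q: "Q = Q1 @ (n-1) # Q2" by (meson split_list)
    have xs: "a # P @ n # Q = (a # P @ [n] @ Q1 @ [n-1]) @ Q2" using Q by simp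
    have dxs: "distinct ((a # P @ [n] @ Q1 @ [n-1]) @ Q2)" using d xs by simp
    have rr: "run (a # P @ [n] @ Q1 @ [n-1]) = feedP Q123 (n-1) (fold (feedP Q123) Q1 (run (a # P @ [n])))"
      using run_append[of "a # P @ [n]" "Q1 @ [n-1]"] by simp
    have Q1n: "\<forall>c\<in>set Q1. c < n \<and> c \<noteq> a"
    proof
      fix c assume c: "c \<in> set Q1"
      then have "c \<in> set (a # P @ n # Q)" using Q by simp
      then have "c \<le> n" using allx by blast
      moreover have "c \<noteq> n" "c \<noteq> a" using c d Q by auto
      ultimately show "c < n \<and> c \<noteq> a" by simp
    qed
    from SC show ?thesis
    proof (elim disjE exE conjE)
      assume e: "run (a # P @ [n]) = ([n, a], Ot)"
      have an': "a < n" using an by simp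
      have "\<exists>t' r'. fold (feedP Q123) Q1 ([] @ [n, a], Ot) = (t' @ [n, a], Ot @ r')"
        by (rule NA_fold[OF Q1n an'])
      then obtain t' r' where f1: "fold (feedP Q123) Q1 ([] @ [n, a], Ot) = (t' @ [n, a], Ot @ r')" by blast
      obtain t'' r'' where f2: "feedP Q123 (n-1) (t' @ [n, a], Ot @ r') = (t'' @ [n, a], (Ot @ r') @ r'')"
        using NA_step[of "n-1" n a t' "Ot @ r'"] an' an n5 by auto
      have "n - 1 \<notin> set [n, a]" using an n5 by auto
      then obtain t3 where "t'' = (n-1) # t3" using top_split[of Q123 "n-1" "(t' @ [n, a], Ot @ r')" t'' "[n, a]"] f2 by auto
      then have "subseq [n-1, n, a] (view (run (a # P @ [n] @ Q1 @ [n-1])))"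
        using rr e f1 f2 sub3[of "n-1" n a "Ot @ r' @ r''" t3 "[]" "[]"] by (simp add: view_def)
      then show ?thesis using bad_prefix[of "n-1" n a "a # P @ [n] @ Q1 @ [n-1]" Q2] dxs xs an n5 by auto
    next
      fix u assume e: "run (a # P @ [n]) = ([n, u, a], Ot)" "u < a"
      let ?S = "run (a # P @ [n] @ Q1 @ [n-1])"
      have N0: "NUA n u a (run (a # P @ [n]))" using e by (simp add: NUA_def)
      have "NUA n u a (fold (feedP Q123) (Q1 @ [n-1]) (run (a # P @ [n])))"
      proof (rule NUA_fold[OF N0])
        show "distinct (Q1 @ [n-1])" using d Q by auto
        show "set (Q1 @ [n - 1]) \<inter> set (view (run (a # P @ [n]))) = {}" using d Q sV by auto
        show "\<forall>c\<in>set (Q1 @ [n - 1]). c < n" using Q1n n5 by auto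
        show "u < a" "a < n" using e an by auto
      qed
      then have N: "NUA n u a ?S" using run_append[of "a # P @ [n]" "Q1 @ [n-1]"] by simp
      have top: "\<And>tt B. fst ?S = tt @ B \<Longrightarrow> n - 1 \<notin> set B \<Longrightarrow> \<exists>t'. tt = (n-1) # t'"
        using top_split rr by metis
      from N[unfolded NUA_def] show ?thesis
      proof (elim disjE exE conjE)
        fix tt assume st: "fst ?S = tt @ [n, u, a]"
        have "n - 1 \<notin> set [n, u, a]" using e an n5 by auto
        then obtain t' where "tt = (n-1) # t'" using top st by blast
        then have "subseq [n-1, n, a] (view ?S)"
          using st sub3[of "n-1" n a "snd ?S" t' "[u]" "[]"] by (simp add: view_def)
        then show ?thesis using bad_prefix[of "n-1" n a "a # P @ [n] @ Q1 @ [n-1]" Q2] dxs xs an n5 by auto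
      next
        fix tt v assume st: "fst ?S = tt @ [v, a]" "v < u" "u \<in> set (snd ?S)"
        have "n - 1 \<notin> set [v, a]" using e st an n5 by auto
        then obtain t' where t': "tt = (n-1) # t'" using top st by blast
        obtain o1 o2 where "snd ?S = o1 @ u # o2" using st(3) by (meson split_list)
        then have "subseq [u, n-1, v] (view ?S)"
          using st t' sub3[of u "n-1" v o1 o2 t' "[a]"] by (simp add: view_def)
        then show ?thesis using bad_prefix[of u "n-1" v "a # P @ [n] @ Q1 @ [n-1]" Q2] dxs xs an n5 st e by auto
      qed
    qed
  qed
qed


lemma last2_eq: "xs @ [a, b] = ys @ [c, d] \<Longrightarrow> a = c"
  by (drule arg_cong[of _ _ rev]) simp

lemma case_n1:
  assumes n5: "n \<ge> 5" and d: "distinct ((n-1) # p1 # P'' @ n # Q)" and s: "set ((n-1) # p1 # P'' @ n # Q) = {1..n}"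
    and Wx: "W (s_123_321 ((n-1) # p1 # P'' @ n # Q))"
  shows "P'' = [] \<and> p1 = n - 2 \<and> Q \<noteq> []"
proof -
  have mem: "\<And>e. e \<in> set ((n-1) # p1 # P'' @ n # Q) \<longleftrightarrow> 1 \<le> e \<and> e \<le> n" using s by auto
  have small: "\<And>e. e \<in> set (p1 # P'' @ Q) \<Longrightarrow> 1 \<le> e \<and> e \<le> n - 2"
  proof -
    fix e assume e: "e \<in> set (p1 # P'' @ Q)"
    then have "1 \<le> e \<and> e \<le> n" using mem by auto
    moreover have "e \<noteq> n - 1" "e \<noteq> n" using e d by auto
    ultimately show "1 \<le> e \<and> e \<le> n - 2" by auto
  qed
  have p1s: "p1 \<le> n - 2" using small[of p1] by simp
  have r2: "run [n-1, p1] = ([] @ [p1, n-1], [])" using q2[of p1 "n-1"] by (simp add: run_def)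
  have dP: "distinct P''" "p1 \<notin> set P''" using d by auto
  obtain t1 v r where F1: "fold (feedP Q123) P'' ([] @ [p1, n-1], []) = (t1 @ [v, n-1], [] @ r)" and vp: "v \<le> p1"
  proof -
    have p1n: "p1 < n - 1" using p1s n5 by simp
    have "\<exists>t' v' r. fold (feedP Q123) P'' ([] @ [p1, n-1], []) = (t' @ [v', n-1], [] @ r) \<and> v' \<le> p1 \<and> (v' = p1 \<or> p1 \<in> set r)"
      by (rule SB_fold[OF dP p1n])
    then show ?thesis using that by blast
  qed
  have S1: "run ((n-1) # p1 # P'') = (t1 @ [v, n-1], r)"
    using run_append[of "[n-1, p1]" P''] r2 F1 by simp
  have vs: "v \<le> n - 2" using vp p1s by simp
  have C: "v = n - 2 \<Longrightarrow> P'' = [] \<and> p1 = n - 2"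
  proof -
    assume v: "v = n - 2"
    then have p1e: "p1 = n - 2" using vp p1s by simp
    show "P'' = [] \<and> p1 = n - 2"
    proof (cases P'')
      case Nil then show ?thesis using p1e by simp
    next
      case (Cons p2 P3)
      have "p2 \<le> n - 2" using small[of p2] Cons by simp
      moreover have "p2 \<noteq> p1" using d Cons by auto
      ultimately have p21: "p2 < p1" using p1e by simp
      have "\<not> Q123 [p2, p1, n-1]" using q3a[of p1 "n-1" p2] p21 p1s n5 by simp
      then have r3: "run [n-1, p1, p2] = ([] @ [p2, n-1], [p1])" using q2[of p2 "n-1"] q2[of p1 "n-1"] by (simp add: run_def)
      have dP3: "distinct P3" "p2 \<notin> set P3" using d Cons by auto
      obtain t1' v' r' where F2: "fold (feedP Q123) P3 ([] @ [p2, n-1], [p1]) = (t1' @ [v', n-1], [p1] @ r')" and "v' \<le> p2"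
      proof -
        have p2n: "p2 < n - 1" using p21 p1s n5 by simp
        have "\<exists>t' v' r'. fold (feedP Q123) P3 ([] @ [p2, n-1], [p1]) = (t' @ [v', n-1], [p1] @ r') \<and> v' \<le> p2 \<and> (v' = p2 \<or> p2 \<in> set r')"
          by (rule SB_fold[OF dP3 p2n])
        then show ?thesis using that by blast
      qed
      have "run ((n-1) # p1 # P'') = (t1' @ [v', n-1], [p1] @ r')"
        using run_append[of "[n-1, p1, p2]" P3] r3 F2 Cons by simp
      then have "v = v'" using S1 last2_eq by simp
      then show ?thesis using \<open>v' \<le> p2\<close> p21 p1e v by simp
    qed
  qed
  let ?pn = "(n-1) # p1 # P'' @ [n]"
  have dpn: "distinct ?pn" using d by simp
  have sV: "set (view (run ?pn)) = set ?pn" by (rule run_set)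
  have dV: "distinct (view (run ?pn))" by (rule run_distinct[OF dpn])
  have Sn0: "run ?pn = feedP Q123 n (t1 @ [v, n-1], r)"
    using run_append[of "(n-1) # p1 # P''" "[n]"] S1 by simp
  have Sn: "run ?pn = ([n, v, n-1], r @ t1)"
  proof -
    from feed_split[of Q123 n t1 "[v, n-1]" r] show ?thesis
    proof
      assume "feedP Q123 n (t1 @ [v, n-1], r) = feedP Q123 n ([v, n-1], r @ t1)"
      moreover have "Q123 [n, v, n-1]" using q3c[of v n "n-1"] vs n5 by simp
      ultimately show ?thesis using Sn0 by simp
    next
      assume "\<exists>ta tb. t1 = ta @ tb \<and> tb \<noteq> [] \<and> Q123 (n # tb @ [v, n-1]) \<and> feedP Q123 n (t1 @ [v, n-1], r) = (n # tb @ [v, n-1], r @ ta)"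
      then obtain ta tb where tt: "tb \<noteq> []" "Q123 (n # tb @ [v, n-1])" "run ?pn = (n # tb @ [v, n-1], r @ ta)"
        using Sn0 by auto
      have dd: "distinct (n # tb @ [v, n-1])" using dV tt(3) by (simp add: view_def)
      have "\<forall>e\<in>set (tb @ [v, n-1]). e < n"
      proof
        fix e assume e: "e \<in> set (tb @ [v, n-1])"
        then have "e \<in> set (view (run ?pn))" using tt(3) by (auto simp: view_def)
        then have "e \<in> set ((n-1) # p1 # P'' @ n # Q)" using sV by auto
        then have "e \<le> n" using mem by blast
        moreover have "e \<noteq> n" using e dd by auto
        ultimately show "e < n" by simp
      qed
      then have "length (tb @ [v, n-1]) \<le> 2" using Q123_len[OF dd] tt(2) by blast
      then show ?thesis using tt(1) by simp
    qed
  qed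
  show ?thesis
  proof (cases "v = n - 2")
    case True
    then have pp: "P'' = [] \<and> p1 = n - 2" by (rule C)
    have "length ((n-1) # p1 # P'' @ n # Q) = n" using distinct_card[OF d] s by simp
    then have "Q \<noteq> []" using pp n5 by auto
    then show ?thesis using pp by simp
  next
    case False
    then have vlt: "v < n - 2" using vs by simp
    have "v \<in> set (view (run ?pn))" using Sn by (simp add: view_def)
    then have vin: "v \<in> set (p1 # P'')" using sV vlt n5 by auto
    have "n - 2 \<in> set ((n-1) # p1 # P'' @ n # Q)" using mem n5 by simp
    then have n2: "n - 2 \<in> set (p1 # P'') \<or> n - 2 \<in> set Q" using n5 by auto
    show ?thesis
    proof (cases "n - 2 \<in> set (p1 # P'')")
      case True
      then have "n - 2 \<in> set (view (run ?pn))" using sV by auto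
      then have "n - 2 \<in> set (r @ t1)" using Sn vlt n5 by (auto simp: view_def)
      then obtain o1 o2 where "r @ t1 = o1 @ (n-2) # o2" by (meson split_list)
      then have "subseq [n-2, n, v] (view (run ?pn))"
        using Sn sub3[of "n-2" n v o1 o2 "[]" "[n-1]"] by (simp add: view_def)
      then have "\<not> W (s_123_321 (?pn @ Q))" using bad_prefix[of "n-2" n v ?pn Q] d vlt n5 by simp
      then show ?thesis using Wx by simp
    next
      case False
      then have n2Q: "n - 2 \<in> set Q" using n2 by simp
      then obtain c Q' where Q: "Q = c # Q'" by (cases Q) auto
      have cs: "c \<le> n - 2" using small[of c] Q by simp
      have cv: "c \<noteq> v" using vin d Q by auto
      let ?pc = "?pn @ [c]"
      have Sc0: "run ?pc = feedP Q123 c ([n, v, n-1], r @ t1)" using run_append[of ?pn "[c]"] Sn by simp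
      show ?thesis
      proof (cases "v < c")
        case True
        have "Q123 [c, n, v, n-1]" using q4[of v "n-1" n c] True cs vlt n5 cv by simp
        then have "run ?pc = ([c, n, v, n-1], r @ t1)" using Sc0 by simp
        then have "subseq [c, n, v] (view (run ?pc))"
          using sub3[of c n v "r @ t1" "[]" "[]" "[n-1]"] by (simp add: view_def)
        then have "\<not> W (s_123_321 (?pc @ Q'))" using bad_prefix[of c n v ?pc Q'] d Q True cs n5 by simp
        then show ?thesis using Wx Q by simp
      next
        case False
        then have cv': "c < v" using cv by simp
        have "\<not> Q123 [c, n, v, n-1]" using q4[of v "n-1" n c] cv' vlt n5 by simp
        moreover have "\<not> Q123 [c, v, n-1]" using q3a[of v "n-1" c] cv' vlt n5 by simp
        ultimately have Sc: "run ?pc = ([] @ [c, n-1], (r @ t1) @ [n, v])"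
          using Sc0 q2[of c "n-1"] by simp
        have "n - 2 \<in> set Q'" using n2Q Q cv' vlt by auto
        then obtain Q1 Q2 where Q': "Q' = Q1 @ (n-2) # Q2" by (meson split_list)
        have dQ1: "distinct Q1" "c \<notin> set Q1" using d Q Q' by auto
        obtain t2 w r2 where F3: "fold (feedP Q123) Q1 ([] @ [c, n-1], (r @ t1) @ [n, v]) = (t2 @ [w, n-1], ((r @ t1) @ [n, v]) @ r2)"
          and wc: "w \<le> c"
        proof -
          have cn: "c < n - 1" using cs n5 by simp
          have "\<exists>t' v' r'. fold (feedP Q123) Q1 ([] @ [c, n-1], (r @ t1) @ [n, v]) = (t' @ [v', n-1], ((r @ t1) @ [n, v]) @ r') \<and> v' \<le> c \<and> (v' = c \<or> c \<in> set r')"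
            by (rule SB_fold[OF dQ1 cn])
          then show ?thesis using that by blast
        qed
        have wn: "n - 2 \<noteq> w" "w < n - 1" using wc cv' vlt by auto
        obtain t3 w' r3 where F4: "feedP Q123 (n-2) (t2 @ [w, n-1], ((r @ t1) @ [n, v]) @ r2) = (t3 @ [w', n-1], (((r @ t1) @ [n, v]) @ r2) @ r3)"
          and w': "w' = w \<or> (w' = n - 2 \<and> n - 2 < w \<and> w \<in> set r3)"
          using SB_step[OF wn] by blast
        have ww: "w' = w" using w' wc cv' vlt by auto
        let ?pf = "?pc @ Q1 @ [n-2]"
        have Sf: "run ?pf = feedP Q123 (n-2) (t2 @ [w, n-1], ((r @ t1) @ [n, v]) @ r2)"
          using run_append[of ?pc "Q1 @ [n-2]"] Sc F3 by simp
        have "n - 2 \<notin> set [w', n-1]" using ww wn n5 by auto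
        moreover have "fst (feedP Q123 (n-2) (t2 @ [w, n-1], ((r @ t1) @ [n, v]) @ r2)) = t3 @ [w', n-1]" using F4 by simp
        ultimately obtain t3' where t3: "t3 = (n-2) # t3'" using top_split by metis
        have "subseq [v, n-2, w] (view (run ?pf))"
          using Sf F4 t3 ww sub3[of v "n-2" w "r @ t1 @ [n]" "r2 @ r3" t3' "[n-1]"] by (simp add: view_def)
        moreover have "?pf @ Q2 = (n-1) # p1 # P'' @ n # Q" using Q Q' by simp
        ultimately have "\<not> W (s_123_321 ((n-1) # p1 # P'' @ n # Q))"
          using bad_prefix[of v "n-2" w ?pf Q2] d wc cv' vlt by (metis le_less_trans)
        then show ?thesis using Wx by simp
      qed
    qed
  qed
qed


theorem corollary4p6:
  fixes n :: nat and x :: "nat list"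
  assumes "n \<ge> 5" and "x \<in> Sort_123_321 n"
  shows "s_123_321 x = s_123_321 (swap12 x)"
proof -
  have n5: "n \<ge> 5" by (rule assms(1))
  have d: "distinct x" and s: "set x = {1..n}" and ws: "west_s (s_123_321 x) = [1..<n+1]"
    using assms(2) unfolding Sort_123_321_def perms_def by auto
  have Wx: "W (s_123_321 x)" unfolding W_def ws by (rule sorted_upt)
  have "n \<in> set x" using s n5 by auto
  then obtain P Q where x: "x = P @ n # Q" by (meson split_list)
  show ?thesis
  proof (cases P)
    case Nil
    then show ?thesis using caseC[of n Q] n5 d s Wx x by simp
  next
    case (Cons a P0)
    have "a \<in> set x" using x Cons by simp
    then have "a \<le> n" "a \<noteq> n" using s d x Cons by auto
    show ?thesis
    proof (cases "a = n - 1")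
      case True
      show ?thesis
      proof (cases P0)
        case Nil
        then show ?thesis using caseB[of n Q] n5 d s Wx x Cons True by simp
      next
        case (Cons p1 P'')
        have xx: "x = (n-1) # p1 # P'' @ n # Q" using x \<open>P = a # P0\<close> Cons True by simp
        have "P'' = [] \<and> p1 = n - 2 \<and> Q \<noteq> []" using case_n1[of n p1 P'' Q] n5 d s Wx xx by simp
        then obtain c Q' where "P'' = []" "p1 = n - 2" "Q = c # Q'" by (cases Q) auto
        then have xA: "x = (n-1) # (n-2) # n # c # Q'" using xx by simp
        show ?thesis using caseA[of n c Q'] n5 d s Wx xA by simp
      qed
    next
      case False
      then have an: "a < n - 1" using \<open>a \<le> n\<close> \<open>a \<noteq> n\<close> by simp
      have "\<not> W (s_123_321 (a # P0 @ n # Q))" using case_low[OF n5 _ _ an, of P0 Q] d s x Cons by simp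
      then show ?thesis using Wx x Cons by simp
    qed
  qed
qed


end
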